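(* Let $G=(V,E,L)$ be a graph with loops and let $V^+:=\{i\in V:\{i,i\}\in L^+\}$ be a stable set of $(V,E)$. Suppose that $(V,E)$ is a chordless cycle. Then $\mathrm{QP}(G)$ has an SOC-representable formulation whose numbers of variables and constraints are bounded by a polynomial in $|V|$.
   Context: A graph with loops is $G=(V,E,L)$: $V$ finite node set, $E$ a set of unordered pairs of distinct nodes, $L$ a set of loops $\{i,i\}$ partitioned as $L=L^-\cup L^+$ (minus/plus loops). $\mathrm{QP}(G):=\mathrm{conv}\{z\in\mathbb{R}^{V\cup E\cup L}: z_{ii}\ge z_i^2\ \forall\{i,i\}\in L^+,\ z_{ii}\le z_i^2\ \forall \{i,i\}\in L^-,\ z_{ij}=z_iz_j\ \forall \{i,j\}\in E,\ z_i\in[0,1]\ \forall i\in V\}$. A convex set is SOC-representable if it is the projection of a set described by finitely many linear constraints and (rotated) second-order cone constraints composed with affine maps. *)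

theory Defs
  imports "HOL-Analysis.Analysis"
begin

text \<open>Coordinates of R^(V \<union> E \<union> L): node variables z_i, edge variables z_ij
  (edge {i,j} represented by the two-element set), loop variables z_ii.\<close>
datatype 'a coord = CV 'a | CE "'a set" | CL 'a

text \<open>A graph with loops G = (V,E,L), L = L^- \<union> L^+ (a partition). A loop {i,i} is
  represented by the node i; Lm / Lp are the nodes carrying minus / plus loops.\<close>
definition graph_with_loops :: "'a set \<Rightarrow> 'a set set \<Rightarrow> 'a set \<Rightarrow> 'a set \<Rightarrow> bool" where
  "graph_with_loops V E Lm Lp \<longleftrightarrow> finite V \<and>
     (\<forall>e\<in>E. \<exists>i j. i \<in> V \<and> j \<in> V \<and> i \<noteq> j \<and> e = {i, j}) \<and>
     Lm \<subseteq> V \<and> Lp \<subseteq> V \<and> Lm \<inter> Lp = {}"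

definition coords :: "'a set \<Rightarrow> 'a set set \<Rightarrow> 'a set \<Rightarrow> 'a set \<Rightarrow> 'a coord set" where
  "coords V E Lm Lp = CV ` V \<union> CE ` E \<union> CL ` (Lm \<union> Lp)"

text \<open>Points of R^I for a finite index set I are functions vanishing outside I.\<close>
definition conv_hull :: "('b \<Rightarrow> real) set \<Rightarrow> ('b \<Rightarrow> real) set" where
  "conv_hull S = {z. \<exists>(k::nat) (c::nat \<Rightarrow> real) p.
      (\<forall>i<k. 0 \<le> c i \<and> p i \<in> S) \<and> (\<Sum>i<k. c i) = 1 \<and>
      z = (\<lambda>x. \<Sum>i<k. c i * p i x)}"

definition QP :: "'a set \<Rightarrow> 'a set set \<Rightarrow> 'a set \<Rightarrow> 'a set \<Rightarrow> ('a coord \<Rightarrow> real) set" where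
  "QP V E Lm Lp = conv_hull {z.
      (\<forall>c. c \<notin> coords V E Lm Lp \<longrightarrow> z c = 0) \<and>
      (\<forall>i\<in>Lp. z (CL i) \<ge> (z (CV i))\<^sup>2) \<and>
      (\<forall>i\<in>Lm. z (CL i) \<le> (z (CV i))\<^sup>2) \<and>
      (\<forall>i j. {i, j} \<in> E \<longrightarrow> z (CE {i, j}) = z (CV i) * z (CV j)) \<and>
      (\<forall>i\<in>V. 0 \<le> z (CV i) \<and> z (CV i) \<le> 1)}"

definition chordless_cycle :: "'a set \<Rightarrow> 'a set set \<Rightarrow> bool" where
  "chordless_cycle V E \<longleftrightarrow> (\<exists>(n::nat) f. n \<ge> 3 \<and> bij_betw f {..<n} V \<and>
      E = {{f i, f ((i + 1) mod n)} | i. i < n})"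

definition stable_set :: "'a set set \<Rightarrow> 'a set \<Rightarrow> bool" where
  "stable_set E S \<longleftrightarrow> (\<forall>i\<in>S. \<forall>j\<in>S. {i, j} \<notin> E)"

text \<open>SOC formulations. Variables are Inl c (c an original coordinate in I) and
  Inr j (j < m, auxiliary). An affine functional is a pair (a, b) evaluated as
  sum over the variables of a v * x v, plus b.\<close>
type_synonym 'b affine = "('b \<Rightarrow> real) \<times> real"

definition vars :: "'b set \<Rightarrow> nat \<Rightarrow> ('b + nat) set" where
  "vars I m = Inl ` I \<union> Inr ` {..<m}"

definition aff_eval :: "'b set \<Rightarrow> nat \<Rightarrow> ('b + nat) affine \<Rightarrow> ('b + nat \<Rightarrow> real) \<Rightarrow> real" where
  "aff_eval I m a x = (\<Sum>v\<in>vars I m. fst a v * x v) + snd a"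

record 'b soc_formulation =
  n_aux :: nat
  lin :: "'b affine list"
  soc :: "('b affine list \<times> 'b affine) list"
  rsoc :: "('b affine list \<times> 'b affine \<times> 'b affine) list"

definition feasible :: "'b set \<Rightarrow> ('b + nat) soc_formulation \<Rightarrow> ('b + nat \<Rightarrow> real) \<Rightarrow> bool" where
  "feasible I F x \<longleftrightarrow> (let ev = aff_eval I (n_aux F) in
     (\<forall>a \<in> set (lin F). ev a x \<le> 0) \<and>
     (\<forall>(A, t) \<in> set (soc F). sqrt (\<Sum>a\<leftarrow>A. (ev a x)\<^sup>2) \<le> ev t x) \<and>
     (\<forall>(A, s, t) \<in> set (rsoc F). (\<Sum>a\<leftarrow>A. (ev a x)\<^sup>2) \<le> ev s x * ev t x \<and>
                                  0 \<le> ev s x \<and> 0 \<le> ev t x))"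

definition projected_set :: "'b set \<Rightarrow> ('b + nat) soc_formulation \<Rightarrow> ('b \<Rightarrow> real) set" where
  "projected_set I F = {(\<lambda>c. if c \<in> I then x (Inl c) else 0) | x. feasible I F x}"

definition num_vars :: "'b set \<Rightarrow> ('b + nat) soc_formulation \<Rightarrow> nat" where
  "num_vars I F = card I + n_aux F"

definition num_constraints :: "('b + nat) soc_formulation \<Rightarrow> nat" where
  "num_constraints F = length (lin F) + length (soc F) + length (rsoc F)"

end

theory Submission
  imports Defs
begin

definition mg :: "nat set \<Rightarrow> (nat set \<Rightarrow> real) \<Rightarrow> nat set \<Rightarrow> nat set \<Rightarrow> real" where
  "mg U D C T = sum D {A. A \<subseteq> U \<and> A \<inter> C = T}"

lemma fin_sub: "finite U \<Longrightarrow> finite {A. A \<subseteq> U \<and> P A}"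
  by (rule finite_subset[of _ "Pow U"]) auto

lemma mg_nonneg: "(\<forall>A\<subseteq>U. 0 \<le> D A) \<Longrightarrow> 0 \<le> mg U D C T"
  unfolding mg_def by (rule sum_nonneg) auto

lemma mg_split:
  assumes "finite U" "a \<notin> C" "T \<subseteq> C"
  shows "mg U D C T = mg U D (insert a C) (insert a T) + mg U D (insert a C) T"
proof -
  have e: "{A. A \<subseteq> U \<and> A \<inter> C = T} =
     {A. A \<subseteq> U \<and> A \<inter> insert a C = insert a T} \<union> {A. A \<subseteq> U \<and> A \<inter> insert a C = T}"
    using assms by auto
  have d: "{A. A \<subseteq> U \<and> A \<inter> insert a C = insert a T} \<inter> {A. A \<subseteq> U \<and> A \<inter> insert a C = T} = {}"
    using assms by auto
  have f1: "finite {A. A \<subseteq> U \<and> A \<inter> insert a C = insert a T}" by (rule fin_sub) (fact assms)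
  have f2: "finite {A. A \<subseteq> U \<and> A \<inter> insert a C = T}" by (rule fin_sub) (fact assms)
  show ?thesis unfolding mg_def e
    by (rule sum.union_disjoint[OF f1 f2 d])
qed

lemma mg_group:
  assumes "finite U" "finite C" "C' \<subseteq> C"
  shows "mg U D C' T' = sum (mg U D C) {T. T \<subseteq> C \<and> T \<inter> C' = T'}"
proof -
  have "sum (\<lambda>T. sum D {A \<in> {A. A \<subseteq> U \<and> A \<inter> C' = T'}. A \<inter> C = T}) {T. T \<subseteq> C \<and> T \<inter> C' = T'}
        = sum D {A. A \<subseteq> U \<and> A \<inter> C' = T'}"
    by (rule sum.group) (use assms fin_sub in auto)
  moreover have "sum (\<lambda>T. sum D {A \<in> {A. A \<subseteq> U \<and> A \<inter> C' = T'}. A \<inter> C = T}) {T. T \<subseteq> C \<and> T \<inter> C' = T'}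
      = sum (\<lambda>T. sum D {A. A \<subseteq> U \<and> A \<inter> C = T}) {T. T \<subseteq> C \<and> T \<inter> C' = T'}"
  proof (rule sum.cong[OF refl])
    fix T assume "T \<in> {T. T \<subseteq> C \<and> T \<inter> C' = T'}"
    then have "{A \<in> {A. A \<subseteq> U \<and> A \<inter> C' = T'}. A \<inter> C = T} = {A. A \<subseteq> U \<and> A \<inter> C = T}"
      using assms by auto
    then show "sum D {A \<in> {A. A \<subseteq> U \<and> A \<inter> C' = T'}. A \<inter> C = T} = sum D {A. A \<subseteq> U \<and> A \<inter> C = T}"
      by simp
  qed
  ultimately show ?thesis unfolding mg_def by simp
qed

lemma mg_expect:
  assumes "finite U" "finite C"
  shows "sum (\<lambda>A. D A * h (A \<inter> C)) (Pow U) = sum (\<lambda>T. mg U D C T * h T) (Pow C)"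
proof -
  have "sum (\<lambda>T. sum (\<lambda>A. D A * h (A \<inter> C)) {A \<in> Pow U. A \<inter> C = T}) (Pow C)
        = sum (\<lambda>A. D A * h (A \<inter> C)) (Pow U)"
    by (rule sum.group) (use assms in auto)
  moreover have "\<And>T. sum (\<lambda>A. D A * h (A \<inter> C)) {A \<in> Pow U. A \<inter> C = T} = mg U D C T * h T"
  proof -
    fix T
    have "sum (\<lambda>A. D A * h (A \<inter> C)) {A \<in> Pow U. A \<inter> C = T} = sum (\<lambda>A. D A * h T) {A \<in> Pow U. A \<inter> C = T}"
      by (rule sum.cong) auto
    also have "\<dots> = mg U D C T * h T" unfolding mg_def sum_distrib_right
      by (rule sum.cong) auto
    finally show "sum (\<lambda>A. D A * h (A \<inter> C)) {A \<in> Pow U. A \<inter> C = T} = mg U D C T * h T" .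
  qed
  ultimately show ?thesis by simp
qed

lemma split_sum:
  assumes "finite W" "C \<subseteq> W" "T \<subseteq> C"
  shows "sum h {A. A \<subseteq> W \<and> A \<inter> C = T} = sum (\<lambda>R. h (T \<union> R)) (Pow (W - C))"
  by (rule sum.reindex_bij_witness[where j="\<lambda>A. A - C" and i="\<lambda>R. T \<union> R"]) (use assms in \<open>auto simp: Int_Diff_Un\<close>)

lemma mg_self: "finite U \<Longrightarrow> T \<subseteq> U \<Longrightarrow> mg U D U T = D T"
proof -
  assume "finite U" "T \<subseteq> U"
  then have "{A. A \<subseteq> U \<and> A \<inter> U = T} = {T}" by auto
  then show ?thesis unfolding mg_def by simp
qed

lemma mg_le:
  assumes "finite U" "\<forall>A\<subseteq>U. 0 \<le> D A" "T \<subseteq> U"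
  shows "D T \<le> mg U D C (T \<inter> C)"
  unfolding mg_def
  by (rule member_le_sum) (use assms fin_sub in auto)

lemma glue_step:
  assumes fU: "finite U" and fB: "finite B"
    and nD: "\<forall>A\<subseteq>U. 0 \<le> D A" and nm: "\<forall>A\<subseteq>B. 0 \<le> \<mu> A"
    and cons: "\<forall>T\<subseteq>B \<inter> U. mg U D (B \<inter> U) T = mg B \<mu> (B \<inter> U) T"
  defines "D' \<equiv> \<lambda>A. D (A \<inter> U) * \<mu> (A \<inter> B) / mg B \<mu> (B \<inter> U) (A \<inter> (B \<inter> U))"
  shows "\<forall>A\<subseteq>U \<union> B. 0 \<le> D' A" "\<forall>T\<subseteq>U. mg (U \<union> B) D' U T = D T"
    "\<forall>T\<subseteq>B. mg (U \<union> B) D' B T = \<mu> T"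
proof -
  define S where "S = B \<inter> U"
  define m where "m = mg B \<mu> S"
  have D'd: "D' A = D (A \<inter> U) * \<mu> (A \<inter> B) / m (A \<inter> S)" for A
    unfolding D'_def m_def S_def by simp
  have mnn: "0 \<le> m T" for T unfolding m_def using nm mg_nonneg by blast
  show "\<forall>A\<subseteq>U \<union> B. 0 \<le> D' A"
  proof (intro allI impI)
    fix A assume "A \<subseteq> U \<union> B"
    have "0 \<le> D (A \<inter> U)" using nD by blast
    moreover have "0 \<le> \<mu> (A \<inter> B)" using nm by blast
    ultimately show "0 \<le> D' A" unfolding D'd using mnn by simp
  qed
  show "\<forall>T\<subseteq>U. mg (U \<union> B) D' U T = D T"
  proof (intro allI impI)
    fix T assume T: "T \<subseteq> U"
    have "mg (U \<union> B) D' U T = sum (\<lambda>R. D' (T \<union> R)) (Pow ((U \<union> B) - U))"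
      unfolding mg_def by (rule split_sum) (use fU fB T in auto)
    also have "\<dots> = sum (\<lambda>R. D T * (\<mu> ((T \<inter> S) \<union> R) / m (T \<inter> S))) (Pow (B - S))"
    proof (rule sum.cong)
      show "Pow (U \<union> B - U) = Pow (B - S)" unfolding S_def by auto
      fix R assume "R \<in> Pow (B - S)"
      then have R: "R \<subseteq> B" "R \<inter> U = {}" unfolding S_def by auto
      have "(T \<union> R) \<inter> U = T" "(T \<union> R) \<inter> B = (T \<inter> S) \<union> R" "(T \<union> R) \<inter> S = T \<inter> S"
        using R T unfolding S_def by auto
      then show "D' (T \<union> R) = D T * (\<mu> ((T \<inter> S) \<union> R) / m (T \<inter> S))" unfolding D'd by simp
    qed
    also have "\<dots> = D T * (sum (\<lambda>R. \<mu> ((T \<inter> S) \<union> R)) (Pow (B - S)) / m (T \<inter> S))"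
      by (simp add: sum_distrib_left sum_divide_distrib)
    also have "sum (\<lambda>R. \<mu> ((T \<inter> S) \<union> R)) (Pow (B - S)) = m (T \<inter> S)"
      unfolding m_def mg_def by (rule split_sum[symmetric]) (use fB S_def in auto)
    also have "D T * (m (T \<inter> S) / m (T \<inter> S)) = D T"
    proof (cases "m (T \<inter> S) = 0")
      case True
      have "D T \<le> mg U D S (T \<inter> S)" using mg_le[OF fU nD T] by simp
      also have "\<dots> = m (T \<inter> S)" proof -
        have sub: "T \<inter> S \<subseteq> B \<inter> U" unfolding S_def by blast
        show ?thesis unfolding m_def S_def by (rule cons[rule_format]) (use sub S_def in simp)
      qed
      finally have "D T \<le> 0" using True by simp
      moreover have "0 \<le> D T" using nD T by blast
      ultimately show ?thesis by simp
    qed simp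
    finally show "mg (U \<union> B) D' U T = D T" .
  qed
  show "\<forall>T\<subseteq>B. mg (U \<union> B) D' B T = \<mu> T"
  proof (intro allI impI)
    fix T assume T: "T \<subseteq> B"
    have "mg (U \<union> B) D' B T = sum (\<lambda>R. D' (T \<union> R)) (Pow ((U \<union> B) - B))"
      unfolding mg_def by (rule split_sum) (use fU fB T in auto)
    also have "\<dots> = sum (\<lambda>R. \<mu> T * (D ((T \<inter> S) \<union> R) / m (T \<inter> S))) (Pow (U - S))"
    proof (rule sum.cong)
      show "Pow (U \<union> B - B) = Pow (U - S)" unfolding S_def by auto
      fix R assume "R \<in> Pow (U - S)"
      then have R: "R \<subseteq> U" "R \<inter> B = {}" unfolding S_def by auto
      have "(T \<union> R) \<inter> B = T" "(T \<union> R) \<inter> U = (T \<inter> S) \<union> R" "(T \<union> R) \<inter> S = T \<inter> S"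
        using R T unfolding S_def by auto
      then show "D' (T \<union> R) = \<mu> T * (D ((T \<inter> S) \<union> R) / m (T \<inter> S))" unfolding D'd by simp
    qed
    also have "\<dots> = \<mu> T * (sum (\<lambda>R. D ((T \<inter> S) \<union> R)) (Pow (U - S)) / m (T \<inter> S))"
      by (simp add: sum_distrib_left sum_divide_distrib)
    also have "sum (\<lambda>R. D ((T \<inter> S) \<union> R)) (Pow (U - S)) = mg U D S (T \<inter> S)"
      unfolding mg_def by (rule split_sum[symmetric]) (use fU S_def in auto)
    also have "\<dots> = m (T \<inter> S)" proof -
        have sub: "T \<inter> S \<subseteq> B \<inter> U" unfolding S_def by blast
        show ?thesis unfolding m_def S_def by (rule cons[rule_format]) (use sub S_def in simp)
      qed
    also have "\<mu> T * (m (T \<inter> S) / m (T \<inter> S)) = \<mu> T"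
    proof (cases "m (T \<inter> S) = 0")
      case True
      have "\<mu> T \<le> mg B \<mu> S (T \<inter> S)" using mg_le[OF fB nm T] by simp
      also have "\<dots> = 0" using True unfolding m_def by auto
      finally have "\<mu> T \<le> 0" .
      moreover have "0 \<le> \<mu> T" using nm T by blast
      ultimately show ?thesis by simp
    qed simp
    finally show "mg (U \<union> B) D' B T = \<mu> T" .
  qed
qed

lemma mg_def_sum: "mg U D C T = sum D {A. A \<subseteq> U \<and> A \<inter> C = T}" by (simp add: mg_def)

lemma glue_chain:
  fixes B :: "nat \<Rightarrow> nat set" and \<mu> :: "nat \<Rightarrow> nat set \<Rightarrow> real"
  assumes fin: "\<forall>k. finite (B k)"
    and ri: "\<forall>k. Suc k < N \<longrightarrow> B (Suc k) \<inter> (\<Union>j\<le>k. B j) \<subseteq> B k"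
    and nn: "\<forall>k<N. \<forall>T\<subseteq>B k. 0 \<le> \<mu> k T"
    and cons: "\<forall>k. Suc k < N \<longrightarrow> (\<forall>T\<subseteq>B k \<inter> B (Suc k).
        mg (B k) (\<mu> k) (B k \<inter> B (Suc k)) T = mg (B (Suc k)) (\<mu> (Suc k)) (B k \<inter> B (Suc k)) T)"
  shows "0 < K \<Longrightarrow> K \<le> N \<Longrightarrow> \<exists>D. (\<forall>A \<subseteq> (\<Union>j<K. B j). 0 \<le> D A) \<and>
           (\<forall>j<K. \<forall>T\<subseteq>B j. mg (\<Union>j<K. B j) D (B j) T = \<mu> j T)"
proof (induction K)
  case 0
  then show ?case by simp
next
  case (Suc K)
  show ?case
  proof (cases "K = 0")
    case True
    have u: "(\<Union>j<Suc K. B j) = B 0" using True by auto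
    show ?thesis unfolding u
      by (rule exI[of _ "\<mu> 0"]) (use True nn Suc.prems mg_self fin in auto)
  next
    case False
    define U where "U = (\<Union>j<K. B j)"
    obtain D where D1: "\<forall>A \<subseteq> U. 0 \<le> D A" and D2: "\<forall>j<K. \<forall>T\<subseteq>B j. mg U D (B j) T = \<mu> j T"
      using Suc False unfolding U_def by auto
    have fU: "finite U" unfolding U_def using fin by auto
    have uS: "(\<Union>j<Suc K. B j) = U \<union> B K" unfolding U_def by (auto simp: lessThan_Suc)
    define k where "k = K - 1"
    have kK: "Suc k = K" using False k_def by simp
    have kN: "Suc k < N" using kK Suc.prems by simp
    have Uk: "U = (\<Union>j\<le>k. B j)" unfolding U_def using kK by (auto simp: lessThan_Suc_atMost[symmetric])
    define S where "S = B K \<inter> U"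
    define S' where "S' = B k \<inter> B K"
    have SS': "S \<subseteq> S'" using ri kN kK Uk unfolding S_def S'_def by auto
    have SU: "S \<subseteq> B k" using SS' unfolding S'_def by auto
    have nk: "\<forall>T\<subseteq>B k. 0 \<le> \<mu> k T" using nn kN by auto
    have nK: "\<forall>T\<subseteq>B K. 0 \<le> \<mu> K T" using nn Suc.prems by auto
    have consK: "\<forall>T\<subseteq>B K \<inter> U. mg U D (B K \<inter> U) T = mg (B K) (\<mu> K) (B K \<inter> U) T"
    proof (intro allI impI)
      fix T assume "T \<subseteq> B K \<inter> U"
      have "mg U D S T = sum (mg U D (B k)) {T2. T2 \<subseteq> B k \<and> T2 \<inter> S = T}"
        by (rule mg_group) (use fU fin SU in auto)
      also have "\<dots> = sum (\<mu> k) {T2. T2 \<subseteq> B k \<and> T2 \<inter> S = T}"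
        by (rule sum.cong) (use D2 kK in auto)
      also have "\<dots> = mg (B k) (\<mu> k) S T" by (simp add: mg_def)
      also have "\<dots> = sum (mg (B k) (\<mu> k) S') {T3. T3 \<subseteq> S' \<and> T3 \<inter> S = T}"
        by (rule mg_group) (use fin SS' S'_def in auto)
      also have "\<dots> = sum (mg (B K) (\<mu> K) S') {T3. T3 \<subseteq> S' \<and> T3 \<inter> S = T}"
        by (rule sum.cong) (use cons kN kK S'_def in auto)
      also have "\<dots> = mg (B K) (\<mu> K) S T"
        by (rule mg_group[symmetric]) (use fin SS' S'_def in auto)
      finally show "mg U D (B K \<inter> U) T = mg (B K) (\<mu> K) (B K \<inter> U) T" unfolding S_def .
    qed
    note g = glue_step[OF fU fin[rule_format, of K] D1 nK consK]
    define D' where "D' = (\<lambda>A. D (A \<inter> U) * \<mu> K (A \<inter> B K) / mg (B K) (\<mu> K) (B K \<inter> U) (A \<inter> (B K \<inter> U)))"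
    have g1: "\<forall>A\<subseteq>U \<union> B K. 0 \<le> D' A" and g2: "\<forall>T\<subseteq>U. mg (U \<union> B K) D' U T = D T"
      and g3: "\<forall>T\<subseteq>B K. mg (U \<union> B K) D' (B K) T = \<mu> K T"
      using g unfolding D'_def by auto
    have fUB: "finite (U \<union> B K)" using fU fin by auto
    have "\<forall>j<Suc K. \<forall>T\<subseteq>B j. mg (U \<union> B K) D' (B j) T = \<mu> j T"
    proof (intro allI impI)
      fix j T assume j: "j < Suc K" and T: "T \<subseteq> B j"
      show "mg (U \<union> B K) D' (B j) T = \<mu> j T"
      proof (cases "j = K")
        case True
        then show ?thesis using g3 T by auto
      next
        case False
        then have jK: "j < K" using j by simp
        have BjU: "B j \<subseteq> U" unfolding U_def using jK by auto
        have "mg (U \<union> B K) D' (B j) T = sum (mg (U \<union> B K) D' U) {T2. T2 \<subseteq> U \<and> T2 \<inter> B j = T}"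
          by (rule mg_group) (use fUB fU BjU in auto)
        also have "\<dots> = sum D {T2. T2 \<subseteq> U \<and> T2 \<inter> B j = T}"
          by (rule sum.cong) (use g2 in auto)
        also have "\<dots> = mg U D (B j) T" by (simp add: mg_def)
        also have "\<dots> = \<mu> j T" using D2 jK T by auto
        finally show ?thesis .
      qed
    qed
    then show ?thesis unfolding uS using g1 by blast
  qed
qed

definition prd :: "nat set \<Rightarrow> (nat \<Rightarrow> real) \<Rightarrow> nat set \<Rightarrow> real" where
  "prd B x T = (\<Prod>i\<in>T. x i) * (\<Prod>i\<in>B - T. 1 - x i)"

lemma prd_sum1: "finite W \<Longrightarrow> sum (prd W x) (Pow W) = 1"
proof -
  assume fW: "finite W"
  have "(\<Prod>i\<in>W. x i + (1 - x i)) = (\<Sum>X\<in>Pow W. (\<Prod>i\<in>X. x i) * (\<Prod>i\<in>W-X. 1 - x i))"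
    by (rule prod_add[OF fW])
  then show ?thesis unfolding prd_def by simp
qed

lemma prd_nonneg: "\<forall>i\<in>B. 0 \<le> x i \<and> x i \<le> 1 \<Longrightarrow> T \<subseteq> B \<Longrightarrow> 0 \<le> prd B x T"
  unfolding prd_def
  by (intro mult_nonneg_nonneg prod_nonneg) auto

lemma prd_union:
  assumes "finite B" "C \<subseteq> B" "T \<subseteq> C" "R \<subseteq> B - C"
  shows "prd B x (T \<union> R) = prd C x T * prd (B - C) x R"
proof -
  have f: "finite T" "finite R" "finite (C - T)" "finite (B - C - R)"
    using assms finite_subset by (auto intro: finite_subset)
  have "(\<Prod>i\<in>T \<union> R. x i) = (\<Prod>i\<in>T. x i) * (\<Prod>i\<in>R. x i)"
    by (rule prod.union_disjoint) (use f assms in auto)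
  moreover have "B - (T \<union> R) = (C - T) \<union> (B - C - R)" using assms by auto
  moreover have "(\<Prod>i\<in>(C - T) \<union> (B - C - R). 1 - x i) = (\<Prod>i\<in>C - T. 1 - x i) * (\<Prod>i\<in>B - C - R. 1 - x i)"
    by (rule prod.union_disjoint) (use f assms in auto)
  ultimately show ?thesis unfolding prd_def by (simp add: ac_simps)
qed

lemma split_sum':
  assumes "finite W" "C \<subseteq> W" "T \<subseteq> C"
  shows "sum h {A. A \<subseteq> W \<and> A \<inter> C = T} = sum (\<lambda>R. h (T \<union> R)) (Pow (W - C))"
  by (rule sum.reindex_bij_witness[where j="\<lambda>A. A - C" and i="\<lambda>R. T \<union> R"]) (use assms in \<open>auto simp: Int_Diff_Un\<close>)

lemma sum_prd_marg:
  assumes "finite B" "C \<subseteq> B" "T \<subseteq> C"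
  shows "sum (prd B x) {A. A \<subseteq> B \<and> A \<inter> C = T} = prd C x T"
proof -
  have "sum (prd B x) {A. A \<subseteq> B \<and> A \<inter> C = T} = sum (\<lambda>R. prd B x (T \<union> R)) (Pow (B - C))"
    by (rule split_sum') (use assms in auto)
  also have "\<dots> = sum (\<lambda>R. prd C x T * prd (B - C) x R) (Pow (B - C))"
    by (rule sum.cong) (use prd_union assms in auto)
  also have "\<dots> = prd C x T * sum (prd (B - C) x) (Pow (B - C))"
    by (simp add: sum_distrib_left)
  also have "\<dots> = prd C x T" using prd_sum1 assms by simp
  finally show ?thesis .
qed

lemma rsoc_add:
  fixes a1 a2 s1 s2 t1 t2 :: real
  assumes "a1^2 \<le> s1 * t1" "a2^2 \<le> s2 * t2" "0 \<le> s1" "0 \<le> s2" "0 \<le> t1" "0 \<le> t2"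
  shows "(a1 + a2)^2 \<le> (s1 + s2) * (t1 + t2)"
proof -
  have "a1^2 * a2^2 \<le> (s1 * t1) * (s2 * t2)"
    using assms by (simp add: mult_mono)
  then have h1: "(a1 * a2)^2 \<le> (s1 * t1) * (s2 * t2)" by (simp add: power_mult_distrib)
  have h2: "(s1 * t2 + s2 * t1)^2 = 4 * ((s1 * t1) * (s2 * t2)) + (s1 * t2 - s2 * t1)^2"
    by (simp add: power2_eq_square algebra_simps)
  have h3: "(2 * (a1 * a2))^2 = 4 * (a1 * a2)^2" by (simp add: power_mult_distrib)
  have "(2 * (a1 * a2))^2 \<le> (s1 * t2 + s2 * t1)^2"
    using h1 h2 h3 zero_le_power2[of "s1 * t2 - s2 * t1"] by linarith
  then have "2 * (a1 * a2) \<le> s1 * t2 + s2 * t1"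
    by (rule power2_le_imp_le) (use assms in simp)
  then show ?thesis using assms by (simp add: power2_eq_square algebra_simps)
qed

lemma rsoc_sum:
  fixes a s t :: "'j \<Rightarrow> real"
  assumes "finite J" "\<forall>j\<in>J. (a j)^2 \<le> s j * t j \<and> 0 \<le> s j \<and> 0 \<le> t j"
  shows "(sum a J)^2 \<le> sum s J * sum t J"
  using assms
proof (induction J rule: finite_induct)
  case empty
  then show ?case by simp
next
  case (insert j J)
  have "(a j + sum a J)^2 \<le> (s j + sum s J) * (t j + sum t J)"
    by (rule rsoc_add) (use insert in \<open>auto intro: sum_nonneg\<close>)
  then show ?case using insert by simp
qed

definition lev :: "'b set \<Rightarrow> nat \<Rightarrow> ('b + nat \<Rightarrow> real) \<Rightarrow> ('b + nat \<Rightarrow> real) \<Rightarrow> real" where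
  "lev I m a x = (\<Sum>v\<in>vars I m. a v * x v)"

definition ind :: "'v \<Rightarrow> 'v \<Rightarrow> real" where
  "ind v = (\<lambda>u. if u = v then 1 else 0)"

lemma aff_lev: "aff_eval I m (a, b) x = lev I m a x + b"
  by (simp add: aff_eval_def lev_def)

lemma finite_vars: "finite I \<Longrightarrow> finite (vars I m)"
  by (simp add: vars_def)

lemma lev_ind: "finite I \<Longrightarrow> v \<in> vars I m \<Longrightarrow> lev I m (ind v) x = x v"
proof -
  assume a: "finite I" "v \<in> vars I m"
  have "(\<Sum>u\<in>vars I m. (if u = v then 1 else 0) * x u) = (\<Sum>u\<in>vars I m. if u = v then x v else 0)"
    by (rule sum.cong) auto
  also have "\<dots> = x v" using a by (simp add: finite_vars)
  finally show ?thesis unfolding lev_def ind_def .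
qed

lemma lev_dif: "lev I m (\<lambda>u. a u - b u) x = lev I m a x - lev I m b x"
  unfolding lev_def by (simp add: left_diff_distrib sum_subtractf)

lemma lev_neg: "lev I m (\<lambda>u. - a u) x = - lev I m a x"
  unfolding lev_def by (simp add: sum_negf)

lemma lev_sum: "lev I m (\<lambda>u. \<Sum>j\<in>J. g j u) x = (\<Sum>j\<in>J. lev I m (g j) x)"
  unfolding lev_def by (simp add: sum_distrib_right sum.swap[of _ J])

lemma lev_comb: "lev I m a (\<lambda>v. \<Sum>j<K. c j * xs j v) = (\<Sum>j<K. c j * lev I m a (xs j))"
  unfolding lev_def by (simp add: sum_distrib_left sum.swap[of _ "{..<K}"] ac_simps)

lemma aff_comb:
  assumes "(\<Sum>j<K. c j) = 1"
  shows "aff_eval I m a (\<lambda>v. \<Sum>j<K. c j * xs j v) = (\<Sum>j<K. c j * aff_eval I m a (xs j))"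
proof -
  obtain a1 b where a: "a = (a1, b)" by (cases a)
  have "aff_eval I m a (\<lambda>v. \<Sum>j<K. c j * xs j v) = (\<Sum>j<K. c j * lev I m a1 (xs j)) + (\<Sum>j<K. c j) * b"
    unfolding a aff_lev lev_comb using assms by simp
  also have "\<dots> = (\<Sum>j<K. c j * aff_eval I m a (xs j))"
    unfolding a aff_lev by (simp add: sum_distrib_right distrib_left sum.distrib)
  finally show ?thesis .
qed

lemma feas_lin: "feasible I F x \<Longrightarrow> a \<in> set (lin F) \<Longrightarrow> aff_eval I (n_aux F) a x \<le> 0"
  unfolding feasible_def Let_def by blast
lemma feas_rsoc: "feasible I F x \<Longrightarrow> (A, s, t) \<in> set (rsoc F) \<Longrightarrow>
   (\<Sum>a\<leftarrow>A. (aff_eval I (n_aux F) a x)\<^sup>2) \<le> aff_eval I (n_aux F) s x * aff_eval I (n_aux F) t x \<and>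
   0 \<le> aff_eval I (n_aux F) s x \<and> 0 \<le> aff_eval I (n_aux F) t x"
  unfolding feasible_def Let_def by (drule conjunct2, drule conjunct2, drule bspec, assumption, simp)
lemma feas_intro: "(\<forall>a \<in> set (lin F). aff_eval I (n_aux F) a x \<le> 0) \<Longrightarrow> soc F = [] \<Longrightarrow>
   (\<forall>(A, s, t) \<in> set (rsoc F). (\<Sum>a\<leftarrow>A. (aff_eval I (n_aux F) a x)\<^sup>2) \<le> aff_eval I (n_aux F) s x * aff_eval I (n_aux F) t x \<and>
   0 \<le> aff_eval I (n_aux F) s x \<and> 0 \<le> aff_eval I (n_aux F) t x) \<Longrightarrow> feasible I F x"
  unfolding feasible_def Let_def by simp

lemma feasible_comb:
  fixes K :: nat
  assumes soc: "soc F = []" and rs: "\<forall>(A, s, t) \<in> set (rsoc F). length A = 1"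
    and c: "\<forall>j<K. 0 \<le> c j" "(\<Sum>j<K. c j) = 1"
    and fe: "\<forall>j<K. feasible I F (xs j)"
  shows "feasible I F (\<lambda>v. \<Sum>j<K. c j * xs j v)"
proof (rule feas_intro[OF _ soc])
  let ?ev = "aff_eval I (n_aux F)"
  let ?x = "\<lambda>v. \<Sum>j<K. c j * xs j v"
  have ev: "?ev a ?x = (\<Sum>j<K. c j * ?ev a (xs j))" for a by (rule aff_comb[OF c(2)])
  show "\<forall>a \<in> set (lin F). ?ev a ?x \<le> 0"
  proof
    fix a assume a: "a \<in> set (lin F)"
    have "\<forall>j<K. ?ev a (xs j) \<le> 0" using fe a feas_lin by blast
    then have "(\<Sum>j<K. c j * ?ev a (xs j)) \<le> 0"
      using c by (intro sum_nonpos) (simp add: mult_nonneg_nonpos)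
    then show "?ev a ?x \<le> 0" using ev by simp
  qed
  show "\<forall>(A, s, t) \<in> set (rsoc F). (\<Sum>a\<leftarrow>A. (?ev a ?x)\<^sup>2) \<le> ?ev s ?x * ?ev t ?x \<and>
                                  0 \<le> ?ev s ?x \<and> 0 \<le> ?ev t ?x"
  proof (intro ballI)
    fix At assume At0: "At \<in> set (rsoc F)"
    obtain A s t where Ast: "At = (A, s, t)" by (cases At) auto
    have At: "(A, s, t) \<in> set (rsoc F)" using At0 Ast by simp
    have "length A = 1" using rs At by fastforce
    then obtain a where A: "A = [a]" by (cases A) auto
    have h: "(?ev a (xs j))\<^sup>2 \<le> ?ev s (xs j) * ?ev t (xs j) \<and> 0 \<le> ?ev s (xs j) \<and> 0 \<le> ?ev t (xs j)"
      if j: "j < K" for j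
      using feas_rsoc[OF fe[rule_format, OF j] At] unfolding A by simp
    have "(\<Sum>j<K. c j * ?ev a (xs j))\<^sup>2 \<le> (\<Sum>j<K. c j * ?ev s (xs j)) * (\<Sum>j<K. c j * ?ev t (xs j))"
    proof (rule rsoc_sum)
      show "\<forall>j\<in>{..<K}. (c j * ?ev a (xs j))\<^sup>2 \<le> c j * ?ev s (xs j) * (c j * ?ev t (xs j)) \<and>
            0 \<le> c j * ?ev s (xs j) \<and> 0 \<le> c j * ?ev t (xs j)"
      proof
        fix j assume "j \<in> {..<K}"
        then have j: "j < K" by simp
        note hj = h[OF j]
        have cj: "0 \<le> c j" using c j by simp
        have "(c j * ?ev a (xs j))\<^sup>2 = (c j)^2 * (?ev a (xs j))\<^sup>2" by (simp add: power_mult_distrib)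
        also have "\<dots> \<le> (c j)^2 * (?ev s (xs j) * ?ev t (xs j))"
          using hj by (intro mult_left_mono) auto
        also have "\<dots> = c j * ?ev s (xs j) * (c j * ?ev t (xs j))" by (simp add: power2_eq_square)
        finally show "(c j * ?ev a (xs j))\<^sup>2 \<le> c j * ?ev s (xs j) * (c j * ?ev t (xs j)) \<and>
            0 \<le> c j * ?ev s (xs j) \<and> 0 \<le> c j * ?ev t (xs j)"
          using hj cj by simp
      qed
    qed (rule finite_lessThan)
    moreover have "0 \<le> (\<Sum>j<K. c j * ?ev s (xs j))" "0 \<le> (\<Sum>j<K. c j * ?ev t (xs j))"
      using h c by (auto intro!: sum_nonneg)
    ultimately show "case At of (A, s, t) \<Rightarrow> (\<Sum>a\<leftarrow>A. (?ev a ?x)\<^sup>2) \<le> ?ev s ?x * ?ev t ?x \<and> 0 \<le> ?ev s ?x \<and> 0 \<le> ?ev t ?x"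
      unfolding Ast A ev by simp
  qed
qed

definition nx :: "nat \<Rightarrow> nat \<Rightarrow> nat" where "nx n i = Suc i mod n"
definition pv :: "nat \<Rightarrow> nat \<Rightarrow> nat" where "pv n i = (i + n - 1) mod n"
definition bag :: "nat \<Rightarrow> nat \<Rightarrow> nat set" where "bag n k = {0, n - 1, k, Suc k, Suc (Suc k)}"

datatype lab = LMu nat "nat set" | LW nat "nat set"

definition labs :: "nat \<Rightarrow> nat set \<Rightarrow> lab set" where
  "labs n P = {LMu k T | k T. k < n - 2 \<and> T \<subseteq> bag n k} \<union> {LW p T | p T. p \<in> P \<and> T \<subseteq> {pv n p, nx n p}}"

definition lst :: "'x set \<Rightarrow> 'x list" where "lst X = (SOME xs. set xs = X \<and> distinct xs)"

lemma lst: "finite X \<Longrightarrow> set (lst X) = X \<and> length (lst X) = card X"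
proof -
  assume "finite X"
  then have "\<exists>xs. set xs = X \<and> distinct xs" by (rule finite_distinct_list)
  then have "set (lst X) = X \<and> distinct (lst X)" unfolding lst_def by (rule someI_ex)
  then show ?thesis using distinct_card by metis
qed

definition eqc :: "('v \<Rightarrow> real) \<Rightarrow> real \<Rightarrow> 'v affine set" where
  "eqc a b = {(a, b), ((\<lambda>u. - a u), - b)}"

definition dif :: "('v \<Rightarrow> real) \<Rightarrow> ('v \<Rightarrow> real) \<Rightarrow> 'v \<Rightarrow> real" where
  "dif a b = (\<lambda>u. a u - b u)"

lemma bag_sub: "k < n - 2 \<Longrightarrow> bag n k \<subseteq> {..<n}"
  unfolding bag_def by auto

lemma finite_bag: "finite (bag n k)" unfolding bag_def by simp

lemma finite_labs: "finite P \<Longrightarrow> finite (labs n P)"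
proof -
  assume fP: "finite P"
  have "{LMu k T | k T. k < n - 2 \<and> T \<subseteq> bag n k} \<subseteq> (\<lambda>(k, T). LMu k T) ` (SIGMA k:{..<n-2}. Pow (bag n k))"
    by auto
  moreover have "finite ((\<lambda>(k, T). LMu k T) ` (SIGMA k:{..<n-2}. Pow (bag n k)))"
    by (intro finite_imageI finite_SigmaI) (auto simp: finite_bag)
  moreover have "{LW p T | p T. p \<in> P \<and> T \<subseteq> {pv n p, nx n p}} \<subseteq> (\<lambda>(p, T). LW p T) ` (SIGMA p:P. Pow {pv n p, nx n p})"
    by auto
  moreover have "finite ((\<lambda>(p, T). LW p T) ` (SIGMA p:P. Pow {pv n p, nx n p}))"
    by (intro finite_imageI finite_SigmaI) (auto simp: fP)
  ultimately show ?thesis unfolding labs_def by (meson finite_Un finite_subset)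
qed

locale cyc =
  fixes V :: "'a set" and E :: "'a set set" and Lm Lp :: "'a set" and n :: nat and f :: "nat \<Rightarrow> 'a"
    and idx :: "lab \<Rightarrow> nat"
  assumes n3: "3 \<le> n" and fbij: "bij_betw f {..<n} V"
    and Edef: "E = {{f i, f ((i + 1) mod n)} | i. i < n}"
    and LmV: "Lm \<subseteq> V" and LpV: "Lp \<subseteq> V" and LmLp: "Lm \<inter> Lp = {}"
    and stab: "stable_set E Lp"
    and idxb: "bij_betw idx (labs n {i. i < n \<and> f i \<in> Lp}) {..<card (labs n {i. i < n \<and> f i \<in> Lp})}"
begin

definition "P = {i. i < n \<and> f i \<in> Lp}"
definition "Mi = {i. i < n \<and> f i \<in> Lm}"
definition "I = coords V E Lm Lp"
definition "m = card (labs n P)"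

definition "muv k T = (Inr (idx (LMu k T)) :: 'a coord + nat)"
definition "wvv p T = (Inr (idx (LW p T)) :: 'a coord + nat)"
definition "cv i = (Inl (CV (f i)) :: 'a coord + nat)"
definition "ce i = (Inl (CE {f i, f (nx n i)}) :: 'a coord + nat)"
definition "cl i = (Inl (CL (f i)) :: 'a coord + nat)"
definition "mgv k C T = (\<lambda>u. \<Sum>T2\<in>{T2. T2 \<subseteq> bag n k \<and> T2 \<inter> C = T}. ind (muv k T2) u)"

definition "L1 = (\<lambda>(k, T). ((\<lambda>u. - ind (muv k T) u), 0::real)) ` (SIGMA k:{..<n-2}. Pow (bag n k))"
definition "L2 = (\<Union>k<n-2. eqc (mgv k {} {}) (-1))"
definition "L3 = (\<Union>(k, T) \<in> (SIGMA k:{k. Suc k < n - 2}. Pow (bag n k \<inter> bag n (Suc k))).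
               eqc (dif (mgv k (bag n k \<inter> bag n (Suc k)) T) (mgv (Suc k) (bag n k \<inter> bag n (Suc k)) T)) 0)"
definition "L4 = (\<Union>(k, i) \<in> (SIGMA k:{..<n-2}. bag n k). eqc (dif (ind (cv i)) (mgv k {i} {i})) 0)"
definition "L5 = (\<Union>(k, i) \<in> (SIGMA k:{..<n-2}. {i. i < n \<and> i \<in> bag n k \<and> nx n i \<in> bag n k}).
               eqc (dif (ind (ce i)) (mgv k {i, nx n i} {i, nx n i})) 0)"
definition "L6 = (\<lambda>(k, i). (dif (ind (cl i)) (mgv k {i} {i}), 0::real)) ` (SIGMA k:{..<n-2}. bag n k \<inter> Mi)"
definition "L7 = (\<lambda>p. (dif (\<lambda>u. \<Sum>T\<in>Pow {pv n p, nx n p}. ind (wvv p T) u) (ind (cl p)), 0::real)) ` P"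
definition "RS = (\<lambda>(p, k, T). ([(mgv k {pv n p, p, nx n p} (insert p T), 0::real)], (ind (wvv p T), 0::real),
                 (mgv k {pv n p, nx n p} T, 0::real)))
    ` (SIGMA p:P. SIGMA k:{k. k < n - 2 \<and> {pv n p, p, nx n p} \<subseteq> bag n k}. Pow {pv n p, nx n p})"

definition "Fm = \<lparr> n_aux = m, lin = lst (L1 \<union> L2 \<union> L3 \<union> L4 \<union> L5 \<union> L6 \<union> L7), soc = [], rsoc = lst RS \<rparr>"

lemma finP: "finite P" unfolding P_def by simp
lemma finI: "finite I"
proof -
  have "finite V" using fbij bij_betw_finite by blast
  moreover have "finite E" unfolding Edef by simp
  moreover have "finite (Lm \<union> Lp)" using \<open>finite V\<close> LmV LpV by (meson finite_Un rev_finite_subset)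
  ultimately show ?thesis unfolding I_def coords_def by simp
qed

lemma fin_k: "finite {k. Suc k < n - 2}" by (rule finite_subset[of _ "{..<n}"]) auto

lemma finite_eqc: "finite (eqc a b)" by (simp add: eqc_def)

lemma fin_L: "finite (L1 \<union> L2 \<union> L3 \<union> L4 \<union> L5 \<union> L6 \<union> L7)"
proof -
  have "finite L1" unfolding L1_def by (intro finite_imageI finite_SigmaI) (simp_all add: finite_bag)
  moreover have "finite L2" unfolding L2_def by (intro finite_UN_I) (simp_all add: finite_eqc)
  moreover have "finite L3" unfolding L3_def
    by (intro finite_UN_I finite_SigmaI) (auto simp: finite_eqc finite_bag fin_k split: prod.splits)
  moreover have "finite L4" unfolding L4_def
    by (intro finite_UN_I finite_SigmaI) (auto simp: finite_eqc finite_bag split: prod.splits)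
  moreover have "finite L5" unfolding L5_def
    by (intro finite_UN_I finite_SigmaI) (auto simp: finite_eqc finite_bag split: prod.splits)
  moreover have "finite L6" unfolding L6_def by (intro finite_imageI finite_SigmaI) (simp_all add: finite_bag)
  moreover have "finite L7" unfolding L7_def by (intro finite_imageI) (simp add: finP)
  ultimately show ?thesis by simp
qed

lemma fin_RS: "finite RS"
  unfolding RS_def by (intro finite_imageI finite_SigmaI) (auto simp: finP)

lemma Fm_simps: "n_aux Fm = m" "set (lin Fm) = L1 \<union> L2 \<union> L3 \<union> L4 \<union> L5 \<union> L6 \<union> L7"
  "soc Fm = []" "set (rsoc Fm) = RS"
  "length (lin Fm) = card (L1 \<union> L2 \<union> L3 \<union> L4 \<union> L5 \<union> L6 \<union> L7)" "length (rsoc Fm) = card RS"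
  unfolding Fm_def using lst[OF fin_L] lst[OF fin_RS] by simp_all

lemma idx_lt: "l \<in> labs n P \<Longrightarrow> idx l < m"
  using idxb unfolding P_def m_def bij_betw_def by auto

lemma muv_vars: "k < n - 2 \<Longrightarrow> T \<subseteq> bag n k \<Longrightarrow> muv k T \<in> vars I m"
  unfolding muv_def vars_def using idx_lt[of "LMu k T"] unfolding labs_def by auto

lemma wvv_vars: "p \<in> P \<Longrightarrow> T \<subseteq> {pv n p, nx n p} \<Longrightarrow> wvv p T \<in> vars I m"
  unfolding wvv_def vars_def using idx_lt[of "LW p T"] unfolding labs_def by auto

lemma fV: "i < n \<Longrightarrow> f i \<in> V" using fbij unfolding bij_betw_def by auto

lemma cv_vars: "i < n \<Longrightarrow> cv i \<in> vars I m"
  unfolding cv_def vars_def I_def coords_def using fV by auto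

lemma nx_alt: "nx n i = (i + 1) mod n" unfolding nx_def by simp

lemma edge_in: "i < n \<Longrightarrow> {f i, f (nx n i)} \<in> E"
  unfolding Edef nx_alt by auto

lemma ce_vars: "i < n \<Longrightarrow> ce i \<in> vars I m"
  unfolding ce_def vars_def I_def coords_def using edge_in by auto

lemma cl_vars: "i \<in> P \<union> Mi \<Longrightarrow> cl i \<in> vars I m"
  unfolding cl_def vars_def I_def coords_def P_def Mi_def by auto

lemma lev_mgv: "k < n - 2 \<Longrightarrow> lev I m (mgv k C T) x = mg (bag n k) (\<lambda>T2. x (muv k T2)) C T"
  unfolding mgv_def lev_sum mg_def
  by (rule sum.cong[OF refl]) (use lev_ind[OF finI] muv_vars in auto)

lemma eqc_iff: "(\<forall>a\<in>eqc a b. aff_eval I m a x \<le> 0) \<longleftrightarrow> lev I m a x + b = 0"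
  unfolding eqc_def by (auto simp: aff_lev lev_neg)

lemma F1: "(\<forall>a\<in>L1. aff_eval I m a x \<le> 0) \<longleftrightarrow> (\<forall>k<n-2. \<forall>T\<subseteq>bag n k. 0 \<le> x (muv k T))"
  unfolding L1_def by (auto simp: aff_lev lev_neg lev_ind[OF finI] muv_vars)

lemma F2: "(\<forall>a\<in>L2. aff_eval I m a x \<le> 0) \<longleftrightarrow> (\<forall>k<n-2. mg (bag n k) (\<lambda>T. x (muv k T)) {} {} = 1)"
  unfolding L2_def by (auto simp: eqc_iff lev_mgv)

lemma F3: "(\<forall>a\<in>L3. aff_eval I m a x \<le> 0) \<longleftrightarrow> (\<forall>k. Suc k < n-2 \<longrightarrow> (\<forall>T\<subseteq>bag n k \<inter> bag n (Suc k).
     mg (bag n k) (\<lambda>T. x (muv k T)) (bag n k \<inter> bag n (Suc k)) T =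
     mg (bag n (Suc k)) (\<lambda>T. x (muv (Suc k) T)) (bag n k \<inter> bag n (Suc k)) T))"
  unfolding L3_def by (auto simp: eqc_iff lev_mgv dif_def lev_dif)

lemma F4: "(\<forall>a\<in>L4. aff_eval I m a x \<le> 0) \<longleftrightarrow> (\<forall>k<n-2. \<forall>i\<in>bag n k.
     x (cv i) = mg (bag n k) (\<lambda>T. x (muv k T)) {i} {i})"
proof -
  have "i \<in> bag n k \<Longrightarrow> k < n - 2 \<Longrightarrow> i < n" for i k using bag_sub by blast
  then show ?thesis unfolding L4_def by (auto simp: eqc_iff lev_mgv dif_def lev_dif lev_ind[OF finI] cv_vars)
qed

lemma F5: "(\<forall>a\<in>L5. aff_eval I m a x \<le> 0) \<longleftrightarrow> (\<forall>k<n-2. \<forall>i<n. i \<in> bag n k \<longrightarrow> nx n i \<in> bag n k \<longrightarrow>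
     x (ce i) = mg (bag n k) (\<lambda>T. x (muv k T)) {i, nx n i} {i, nx n i})"
  unfolding L5_def by (auto simp: eqc_iff lev_mgv dif_def lev_dif lev_ind[OF finI] ce_vars)

lemma F6: "(\<forall>a\<in>L6. aff_eval I m a x \<le> 0) \<longleftrightarrow> (\<forall>k<n-2. \<forall>i\<in>bag n k. i \<in> Mi \<longrightarrow>
     x (cl i) \<le> mg (bag n k) (\<lambda>T. x (muv k T)) {i} {i})"
  unfolding L6_def by (auto simp: aff_lev lev_mgv dif_def lev_dif lev_ind[OF finI] cl_vars)

lemma F7: "(\<forall>a\<in>L7. aff_eval I m a x \<le> 0) \<longleftrightarrow> (\<forall>p\<in>P.
     (\<Sum>T\<in>Pow {pv n p, nx n p}. x (wvv p T)) \<le> x (cl p))"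
proof -
  have "p \<in> P \<Longrightarrow> lev I m (\<lambda>u. \<Sum>T\<in>Pow {pv n p, nx n p}. ind (wvv p T) u) x = (\<Sum>T\<in>Pow {pv n p, nx n p}. x (wvv p T))" for p
    unfolding lev_sum by (rule sum.cong[OF refl]) (use lev_ind[OF finI] wvv_vars in auto)
  then show ?thesis unfolding L7_def by (auto simp: aff_lev dif_def lev_dif lev_ind[OF finI] cl_vars)
qed

lemma FR: "(\<forall>(A, s, t) \<in> RS. (\<Sum>a\<leftarrow>A. (aff_eval I m a x)\<^sup>2) \<le> aff_eval I m s x * aff_eval I m t x \<and>
     0 \<le> aff_eval I m s x \<and> 0 \<le> aff_eval I m t x) \<longleftrightarrow>
   (\<forall>p\<in>P. \<forall>k<n-2. {pv n p, p, nx n p} \<subseteq> bag n k \<longrightarrow> (\<forall>T\<subseteq>{pv n p, nx n p}.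
      (mg (bag n k) (\<lambda>T. x (muv k T)) {pv n p, p, nx n p} (insert p T))\<^sup>2
         \<le> x (wvv p T) * mg (bag n k) (\<lambda>T. x (muv k T)) {pv n p, nx n p} T \<and>
      0 \<le> x (wvv p T) \<and> 0 \<le> mg (bag n k) (\<lambda>T. x (muv k T)) {pv n p, nx n p} T))"
  unfolding RS_def by (auto simp: aff_lev lev_mgv lev_ind[OF finI] wvv_vars)

definition "Facts x \<longleftrightarrow>
  (\<forall>k<n-2. \<forall>T\<subseteq>bag n k. 0 \<le> x (muv k T)) \<and>
  (\<forall>k<n-2. mg (bag n k) (\<lambda>T. x (muv k T)) {} {} = 1) \<and>
  (\<forall>k. Suc k < n-2 \<longrightarrow> (\<forall>T\<subseteq>bag n k \<inter> bag n (Suc k).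
     mg (bag n k) (\<lambda>T. x (muv k T)) (bag n k \<inter> bag n (Suc k)) T =
     mg (bag n (Suc k)) (\<lambda>T. x (muv (Suc k) T)) (bag n k \<inter> bag n (Suc k)) T)) \<and>
  (\<forall>k<n-2. \<forall>i\<in>bag n k. x (cv i) = mg (bag n k) (\<lambda>T. x (muv k T)) {i} {i}) \<and>
  (\<forall>k<n-2. \<forall>i<n. i \<in> bag n k \<longrightarrow> nx n i \<in> bag n k \<longrightarrow>
     x (ce i) = mg (bag n k) (\<lambda>T. x (muv k T)) {i, nx n i} {i, nx n i}) \<and>
  (\<forall>k<n-2. \<forall>i\<in>bag n k. i \<in> Mi \<longrightarrow> x (cl i) \<le> mg (bag n k) (\<lambda>T. x (muv k T)) {i} {i}) \<and>
  (\<forall>p\<in>P. (\<Sum>T\<in>Pow {pv n p, nx n p}. x (wvv p T)) \<le> x (cl p)) \<and>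
  (\<forall>p\<in>P. \<forall>k<n-2. {pv n p, p, nx n p} \<subseteq> bag n k \<longrightarrow> (\<forall>T\<subseteq>{pv n p, nx n p}.
      (mg (bag n k) (\<lambda>T. x (muv k T)) {pv n p, p, nx n p} (insert p T))\<^sup>2
         \<le> x (wvv p T) * mg (bag n k) (\<lambda>T. x (muv k T)) {pv n p, nx n p} T \<and>
      0 \<le> x (wvv p T) \<and> 0 \<le> mg (bag n k) (\<lambda>T. x (muv k T)) {pv n p, nx n p} T))"

lemma feasible_iff: "feasible I Fm x \<longleftrightarrow> Facts x"
proof -
  have "feasible I Fm x \<longleftrightarrow> (\<forall>a\<in>L1 \<union> L2 \<union> L3 \<union> L4 \<union> L5 \<union> L6 \<union> L7. aff_eval I m a x \<le> 0) \<and>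
     (\<forall>(A, s, t) \<in> RS. (\<Sum>a\<leftarrow>A. (aff_eval I m a x)\<^sup>2) \<le> aff_eval I m s x * aff_eval I m t x \<and>
     0 \<le> aff_eval I m s x \<and> 0 \<le> aff_eval I m t x)"
    unfolding feasible_def Let_def Fm_simps by simp
  also have "\<dots> \<longleftrightarrow> Facts x"
    unfolding Facts_def ball_Un F1 F2 F3 F4 F5 F6 F7 FR by simp
  finally show ?thesis .
qed

end

lemma pos_facts:
  assumes n3: "3 \<le> n" and i: "i < n"
  shows "nx n i < n" "pv n i < n" "pv n (nx n i) = i" "nx n (pv n i) = i"
    "i \<noteq> nx n i" "i \<noteq> pv n i" "pv n i \<noteq> nx n i"
proof -
  show "nx n i < n" unfolding nx_def using i by simp
  show "pv n i < n" unfolding pv_def using i by simp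
  show "pv n (nx n i) = i" unfolding pv_def nx_def using i n3
    by (cases "Suc i = n") (auto simp: mod_if)
  show "nx n (pv n i) = i" unfolding pv_def nx_def using i n3
    by (cases "i = 0") (auto simp: mod_if)
  show "i \<noteq> nx n i" unfolding nx_def using i n3 by (auto simp: mod_if)
  show "i \<noteq> pv n i" unfolding pv_def using i n3 by (auto simp: mod_if)
  show "pv n i \<noteq> nx n i" unfolding pv_def nx_def using i n3 by (auto simp: mod_if)
qed

lemma bag_node: "3 \<le> n \<Longrightarrow> i < n \<Longrightarrow> \<exists>k<n-2. i \<in> bag n k"
proof -
  assume n3: "3 \<le> n" and i: "i < n"
  show ?thesis
  proof (cases "i \<le> n - 3")
    case True
    then show ?thesis using n3 by (intro exI[of _ i]) (simp add: bag_def)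
  next
    case False
    then have "i = n - 2 \<or> i = n - 1" using i by linarith
    then show ?thesis using n3 by (intro exI[of _ "n - 3"]) (auto simp add: bag_def)
  qed
qed

lemma bag_edge: "3 \<le> n \<Longrightarrow> i < n \<Longrightarrow> \<exists>k<n-2. i \<in> bag n k \<and> nx n i \<in> bag n k"
proof -
  assume n3: "3 \<le> n" and i: "i < n"
  show ?thesis
  proof (cases "i \<le> n - 3")
    case True
    then have "nx n i = Suc i" unfolding nx_def using n3 by simp
    then show ?thesis using n3 True by (intro exI[of _ i]) (simp add: bag_def)
  next
    case False
    then have "i = n - 2 \<or> i = n - 1" using i by linarith
    then show ?thesis
    proof
      assume a: "i = n - 2"
      then have "nx n i = n - 1" unfolding nx_def using n3 by simp
      moreover have "n - 2 = Suc (n - 3)" "n - 1 = Suc (Suc (n - 3))" using n3 by arith+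
      ultimately show ?thesis using n3 a by (intro exI[of _ "n - 3"]) (simp add: bag_def)
    next
      assume a: "i = n - 1"
      then have "nx n i = 0" unfolding nx_def using n3 by simp
      then show ?thesis using n3 a by (intro exI[of _ "n - 3"]) (simp add: bag_def)
    qed
  qed
qed

lemma bag_tri: "3 \<le> n \<Longrightarrow> p < n \<Longrightarrow> \<exists>k<n-2. {pv n p, p, nx n p} \<subseteq> bag n k"
proof -
  assume n3: "3 \<le> n" and p: "p < n"
  consider "p = 0" | "0 < p \<and> p \<le> n - 2" | "p = n - 1" using p by linarith
  then show ?thesis
  proof cases
    case 1
    then have "pv n p = n - 1" "nx n p = 1" unfolding pv_def nx_def using n3 by auto
    then show ?thesis using n3 1 by (intro exI[of _ 0]) (simp add: bag_def)
  next
    case 2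
    have "p + n - 1 = (p - 1) + n" using 2 by arith
    then have "(p + n - 1) mod n = ((p - 1) + n) mod n" by (rule arg_cong)
    also have "\<dots> = (p - 1) mod n" by (rule mod_add_self2)
    also have "\<dots> = p - 1" using 2 n3 by (intro mod_less) arith
    finally have "pv n p = p - 1" unfolding pv_def .
    moreover have "nx n p = Suc p" unfolding nx_def using n3 2 by auto
    ultimately show ?thesis using n3 2 by (intro exI[of _ "p - 1"]) (simp add: bag_def, arith)
  next
    case 3
    have "p + n - 1 = (n - 2) + n" using 3 n3 by arith
    then have "(p + n - 1) mod n = ((n - 2) + n) mod n" by (rule arg_cong)
    also have "\<dots> = (n - 2) mod n" by (rule mod_add_self2)
    also have "\<dots> = n - 2" using n3 by (intro mod_less) arith
    finally have "pv n p = n - 2" unfolding pv_def .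
    moreover have "nx n p = 0" unfolding nx_def using n3 3 by auto
    moreover have "n - 2 = Suc (n - 3)" "n - 1 = Suc (Suc (n - 3))" using n3 by arith+
    ultimately show ?thesis using n3 3 by (intro exI[of _ "n - 3"]) (simp add: bag_def)
  qed
qed

lemma bag_ri: "3 \<le> n \<Longrightarrow> Suc k < n - 2 \<Longrightarrow> bag n (Suc k) \<inter> (\<Union>j\<le>k. bag n j) \<subseteq> bag n k"
proof
  fix x assume n3: "3 \<le> n" and k: "Suc k < n - 2" and x: "x \<in> bag n (Suc k) \<inter> (\<Union>j\<le>k. bag n j)"
  then obtain j where j: "j \<le> k" "x \<in> bag n j" by auto
  have x1: "x = 0 \<or> x = n - 1 \<or> x = Suc k \<or> x = Suc (Suc k) \<or> x = Suc (Suc (Suc k))"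
    using x unfolding bag_def by auto
  have x2: "x = 0 \<or> x = n - 1 \<or> x = j \<or> x = Suc j \<or> x = Suc (Suc j)"
    using j unfolding bag_def by auto
  have "x = 0 \<or> x = n - 1 \<or> x = k \<or> x = Suc k \<or> x = Suc (Suc k)"
    using x1 x2 j by linarith
  then show "x \<in> bag n k" unfolding bag_def by auto
qed

lemma bag_union: "3 \<le> n \<Longrightarrow> (\<Union>j<n-2. bag n j) = {..<n}"
proof
  assume n3: "3 \<le> n"
  show "(\<Union>j<n-2. bag n j) \<subseteq> {..<n}" using bag_sub by blast
  show "{..<n} \<subseteq> (\<Union>j<n-2. bag n j)" using bag_node[OF n3] by blast
qed

definition cmf :: "nat set \<Rightarrow> (nat set \<Rightarrow> real) \<Rightarrow> nat \<Rightarrow> nat \<Rightarrow> nat \<Rightarrow> nat set \<Rightarrow> real" where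
  "cmf U D p u w T = mg U D {u, p, w} (insert p T) / mg U D {u, w} T"

lemma cmf_sym: "cmf U D p u w = cmf U D p w u"
  unfolding cmf_def by (simp add: insert_commute)

context
  fixes U :: "nat set" and D :: "nat set \<Rightarrow> real" and p u w :: nat
  assumes fU: "finite U" and nD: "\<forall>A\<subseteq>U. 0 \<le> D A" and d: "p \<noteq> u" "p \<noteq> w" "u \<noteq> w"
begin

lemma num_split: "T \<subseteq> {u, w} \<Longrightarrow> mg U D {u, w} T = mg U D {u, p, w} (insert p T) + mg U D {u, p, w} T"
proof -
  assume T: "T \<subseteq> {u, w}"
  have "mg U D {u, w} T = mg U D (insert p {u, w}) (insert p T) + mg U D (insert p {u, w}) T"
    by (rule mg_split) (use fU d T in auto)
  moreover have "insert p {u, w} = {u, p, w}" by auto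
  ultimately show ?thesis by simp
qed

lemma num_le: "T \<subseteq> {u, w} \<Longrightarrow> 0 \<le> mg U D {u, p, w} (insert p T) \<and> mg U D {u, p, w} (insert p T) \<le> mg U D {u, w} T"
  using num_split[of T] mg_nonneg[OF nD] by (smt (verit))

lemma cmf_01: "T \<subseteq> {u, w} \<Longrightarrow> 0 \<le> cmf U D p u w T \<and> cmf U D p u w T \<le> 1"
  using num_le[of T] unfolding cmf_def
  by (auto intro: divide_nonneg_nonneg simp: divide_le_eq_1)

lemma cmf_mul: "T \<subseteq> {u, w} \<Longrightarrow> mg U D {u, w} T * cmf U D p u w T = mg U D {u, p, w} (insert p T)"
  using num_le[of T] unfolding cmf_def by (cases "mg U D {u, w} T = 0") auto

lemma sum_ins: "sum (\<lambda>T. mg U D {u, p, w} (insert p T)) {T. T \<subseteq> {u, w} \<and> Q T}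
   = sum (mg U D {u, p, w}) {T2. T2 \<subseteq> {u, p, w} \<and> p \<in> T2 \<and> Q (T2 - {p})}"
proof -
  have h: "\<And>a. a \<subseteq> {u, w} \<Longrightarrow> a - {p} = a" using d by auto
  show ?thesis
    by (rule sum.reindex_bij_witness[where j="insert p" and i="\<lambda>T2. T2 - {p}"]) (use d h in auto)
qed

lemma exp_node: "(\<Sum>A\<in>Pow U. D A * cmf U D p u w (A \<inter> {u, w})) = mg U D {p} {p}"
proof -
  have "(\<Sum>A\<in>Pow U. D A * cmf U D p u w (A \<inter> {u, w})) = (\<Sum>T\<in>Pow {u, w}. mg U D {u, w} T * cmf U D p u w T)"
    by (rule mg_expect) (use fU in auto)
  also have "\<dots> = (\<Sum>T\<in>{T. T \<subseteq> {u, w} \<and> True}. mg U D {u, p, w} (insert p T))"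
    by (rule sum.cong) (auto simp: cmf_mul)
  also have "\<dots> = sum (mg U D {u, p, w}) {T2. T2 \<subseteq> {u, p, w} \<and> T2 \<inter> {p} = {p}}"
    unfolding sum_ins by (rule sum.cong) auto
  also have "\<dots> = mg U D {p} {p}"
    by (rule mg_group[symmetric]) (use fU in auto)
  finally show ?thesis .
qed

lemma exp_edge: "(\<Sum>A\<in>Pow U. D A * (cmf U D p u w (A \<inter> {u, w}) * (if u \<in> A then 1 else 0))) = mg U D {u, p} {u, p}"
proof -
  have "(\<Sum>A\<in>Pow U. D A * (cmf U D p u w (A \<inter> {u, w}) * (if u \<in> A then 1 else 0)))
      = (\<Sum>A\<in>Pow U. D A * (\<lambda>T. cmf U D p u w T * (if u \<in> T then 1 else 0)) (A \<inter> {u, w}))"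
    by (rule sum.cong) auto
  also have "\<dots> = (\<Sum>T\<in>Pow {u, w}. mg U D {u, w} T * (cmf U D p u w T * (if u \<in> T then 1 else 0)))"
    by (rule mg_expect) (use fU in auto)
  also have "\<dots> = (\<Sum>T\<in>Pow {u, w}. if u \<in> T then mg U D {u, p, w} (insert p T) else 0)"
    by (rule sum.cong) (auto simp: cmf_mul[symmetric])
  also have "\<dots> = (\<Sum>T\<in>{T. T \<subseteq> {u, w} \<and> u \<in> T}. mg U D {u, p, w} (insert p T))"
    by (subst sum.inter_filter[symmetric]) (auto intro: sum.cong)
  also have "\<dots> = sum (mg U D {u, p, w}) {T2. T2 \<subseteq> {u, p, w} \<and> T2 \<inter> {u, p} = {u, p}}"
    unfolding sum_ins by (rule sum.cong) (use d in auto)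
  also have "\<dots> = mg U D {u, p} {u, p}"
    by (rule mg_group[symmetric]) (use fU in auto)
  finally show ?thesis .
qed

lemma exp_sq: "(\<Sum>A\<in>Pow U. D A * (cmf U D p u w (A \<inter> {u, w}))^2)
   = (\<Sum>T\<in>Pow {u, w}. (mg U D {u, p, w} (insert p T))^2 / mg U D {u, w} T)"
proof -
  have "(\<Sum>A\<in>Pow U. D A * (cmf U D p u w (A \<inter> {u, w}))^2)
      = (\<Sum>T\<in>Pow {u, w}. mg U D {u, w} T * (cmf U D p u w T)^2)"
    using mg_expect[OF fU, of "{u, w}" D "\<lambda>T. (cmf U D p u w T)^2"] by simp
  also have "\<dots> = (\<Sum>T\<in>Pow {u, w}. (mg U D {u, p, w} (insert p T))^2 / mg U D {u, w} T)"
    by (rule sum.cong) (auto simp: cmf_def power2_eq_square)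
  finally show ?thesis .
qed

end

lemma exp_ind: "finite U \<Longrightarrow> C \<subseteq> U \<Longrightarrow> (\<Sum>A\<in>Pow U. D A * (if C \<subseteq> A then 1 else 0)) = mg U D C C"
proof -
  assume fU: "finite U" and C: "C \<subseteq> U"
  have "(\<Sum>A\<in>Pow U. D A * (if C \<subseteq> A then 1 else 0)) = (\<Sum>A\<in>Pow U. if C \<subseteq> A then D A else 0)"
    by (rule sum.cong) auto
  also have "\<dots> = sum D {A \<in> Pow U. C \<subseteq> A}" by (rule sum.inter_filter[symmetric]) (use fU in auto)
  also have "\<dots> = mg U D C C" unfolding mg_def by (rule sum.cong) auto
  finally show ?thesis .
qed

definition Sset :: "'a set \<Rightarrow> 'a set set \<Rightarrow> 'a set \<Rightarrow> 'a set \<Rightarrow> ('a coord \<Rightarrow> real) set" where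
  "Sset V E Lm Lp = {z.
      (\<forall>c. c \<notin> coords V E Lm Lp \<longrightarrow> z c = 0) \<and>
      (\<forall>i\<in>Lp. z (CL i) \<ge> (z (CV i))\<^sup>2) \<and>
      (\<forall>i\<in>Lm. z (CL i) \<le> (z (CV i))\<^sup>2) \<and>
      (\<forall>i j. {i, j} \<in> E \<longrightarrow> z (CE {i, j}) = z (CV i) * z (CV j)) \<and>
      (\<forall>i\<in>V. 0 \<le> z (CV i) \<and> z (CV i) \<le> 1)}"

lemma QP_alt: "QP V E Lm Lp = conv_hull (Sset V E Lm Lp)"
  unfolding QP_def Sset_def by simp

lemma prd_single: "prd {i} x {i} = x i" unfolding prd_def by simp
lemma prd_empty: "prd {} x {} = 1" unfolding prd_def by simp
lemma prd_pair: "i \<noteq> j \<Longrightarrow> prd {i, j} x {i, j} = x i * x j" unfolding prd_def by simp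

lemma prd_ins:
  assumes "p \<notin> C" "T \<subseteq> C" "finite C"
  shows "prd (insert p C) x (insert p T) = x p * prd C x T"
proof -
  have "p \<notin> T" using assms by auto
  moreover have "insert p C - insert p T = C - T" using assms by auto
  moreover have "finite T" using assms finite_subset by auto
  ultimately show ?thesis unfolding prd_def by simp
qed

context cyc
begin

lemma inj_idx: "inj_on idx (labs n P)" using idxb unfolding P_def bij_betw_def by simp

definition "Xz z i = z (CV (f i))"

definition "lift z = (\<lambda>v. case v of Inl c \<Rightarrow> z c | Inr j \<Rightarrow>
   (case the_inv_into (labs n P) idx j of LMu k T \<Rightarrow> prd (bag n k) (Xz z) T
     | LW p T \<Rightarrow> prd {pv n p, nx n p} (Xz z) T * (Xz z p)^2))"

lemma lift_muv: "k < n - 2 \<Longrightarrow> T \<subseteq> bag n k \<Longrightarrow> lift z (muv k T) = prd (bag n k) (Xz z) T"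
proof -
  assume "k < n - 2" "T \<subseteq> bag n k"
  then have "LMu k T \<in> labs n P" unfolding labs_def by auto
  then have "the_inv_into (labs n P) idx (idx (LMu k T)) = LMu k T" by (rule the_inv_into_f_f[OF inj_idx])
  then show ?thesis unfolding lift_def muv_def by simp
qed

lemma lift_wvv: "p \<in> P \<Longrightarrow> T \<subseteq> {pv n p, nx n p} \<Longrightarrow> lift z (wvv p T) = prd {pv n p, nx n p} (Xz z) T * (Xz z p)^2"
proof -
  assume "p \<in> P" "T \<subseteq> {pv n p, nx n p}"
  then have "LW p T \<in> labs n P" unfolding labs_def by auto
  then have "the_inv_into (labs n P) idx (idx (LW p T)) = LW p T" by (rule the_inv_into_f_f[OF inj_idx])
  then show ?thesis unfolding lift_def wvv_def by simp
qed

lemma mg_lift: "k < n - 2 \<Longrightarrow> C \<subseteq> bag n k \<Longrightarrow> T \<subseteq> C \<Longrightarrow>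
   mg (bag n k) (\<lambda>T. lift z (muv k T)) C T = prd C (Xz z) T"
proof -
  assume k: "k < n - 2" and C: "C \<subseteq> bag n k" and T: "T \<subseteq> C"
  have "mg (bag n k) (\<lambda>T. lift z (muv k T)) C T = sum (prd (bag n k) (Xz z)) {A. A \<subseteq> bag n k \<and> A \<inter> C = T}"
    unfolding mg_def by (rule sum.cong) (use lift_muv k in auto)
  also have "\<dots> = prd C (Xz z) T" by (rule sum_prd_marg) (use C T finite_bag in auto)
  finally show ?thesis .
qed

lemma P_lt: "p \<in> P \<Longrightarrow> p < n" unfolding P_def by simp
lemma Mi_lt: "i \<in> Mi \<Longrightarrow> i < n" unfolding Mi_def by simp
lemma bag_lt: "k < n - 2 \<Longrightarrow> i \<in> bag n k \<Longrightarrow> i < n" using bag_sub by blast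

lemma lift_facts:
  assumes z: "z \<in> Sset V E Lm Lp"
  shows "Facts (lift z)"
proof -
  note zS = z[unfolded Sset_def, simplified]
  have X01: "0 \<le> Xz z i \<and> Xz z i \<le> 1" if "i < n" for i using zS fV[OF that] unfolding Xz_def by auto
  have c1: "\<forall>k<n-2. \<forall>T\<subseteq>bag n k. 0 \<le> lift z (muv k T)"
    using lift_muv prd_nonneg X01 bag_lt by (metis subset_iff)
  have c2: "\<forall>k<n-2. mg (bag n k) (\<lambda>T. lift z (muv k T)) {} {} = 1"
    using mg_lift[of _ "{}" "{}"] prd_empty by simp
  have c3: "\<forall>k. Suc k < n-2 \<longrightarrow> (\<forall>T\<subseteq>bag n k \<inter> bag n (Suc k).
     mg (bag n k) (\<lambda>T. lift z (muv k T)) (bag n k \<inter> bag n (Suc k)) T =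
     mg (bag n (Suc k)) (\<lambda>T. lift z (muv (Suc k) T)) (bag n k \<inter> bag n (Suc k)) T)"
  proof (intro allI impI)
    fix k T assume k: "Suc k < n - 2" and T: "T \<subseteq> bag n k \<inter> bag n (Suc k)"
    show "mg (bag n k) (\<lambda>T. lift z (muv k T)) (bag n k \<inter> bag n (Suc k)) T =
     mg (bag n (Suc k)) (\<lambda>T. lift z (muv (Suc k) T)) (bag n k \<inter> bag n (Suc k)) T"
      using mg_lift[of k "bag n k \<inter> bag n (Suc k)" T] mg_lift[of "Suc k" "bag n k \<inter> bag n (Suc k)" T] k T
      by simp
  qed
  have c4: "\<forall>k<n-2. \<forall>i\<in>bag n k. lift z (cv i) = mg (bag n k) (\<lambda>T. lift z (muv k T)) {i} {i}"
    using mg_lift[of _ "{i}" "{i}" for i] prd_single unfolding lift_def cv_def Xz_def by simp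
  have c5: "\<forall>k<n-2. \<forall>i<n. i \<in> bag n k \<longrightarrow> nx n i \<in> bag n k \<longrightarrow>
     lift z (ce i) = mg (bag n k) (\<lambda>T. lift z (muv k T)) {i, nx n i} {i, nx n i}"
  proof (intro allI impI)
    fix k i assume k: "k < n - 2" and i: "i < n" and b: "i \<in> bag n k" "nx n i \<in> bag n k"
    have "mg (bag n k) (\<lambda>T. lift z (muv k T)) {i, nx n i} {i, nx n i} = Xz z i * Xz z (nx n i)"
      using mg_lift[of k "{i, nx n i}" "{i, nx n i}"] k b prd_pair pos_facts(5)[OF n3 i] by simp
    also have "\<dots> = z (CE {f i, f (nx n i)})" using zS edge_in[OF i] unfolding Xz_def by auto
    finally show "lift z (ce i) = mg (bag n k) (\<lambda>T. lift z (muv k T)) {i, nx n i} {i, nx n i}"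
      unfolding lift_def ce_def by simp
  qed
  have c6: "\<forall>k<n-2. \<forall>i\<in>bag n k. i \<in> Mi \<longrightarrow> lift z (cl i) \<le> mg (bag n k) (\<lambda>T. lift z (muv k T)) {i} {i}"
  proof (intro allI impI ballI)
    fix k i assume k: "k < n - 2" and b: "i \<in> bag n k" and i: "i \<in> Mi"
    have "lift z (cl i) = z (CL (f i))" unfolding lift_def cl_def by simp
    also have "\<dots> \<le> (Xz z i)^2" using zS i unfolding Mi_def Xz_def by auto
    also have "\<dots> \<le> Xz z i" using X01[OF Mi_lt[OF i]] by (simp add: power2_eq_square mult_left_le)
    also have "\<dots> = mg (bag n k) (\<lambda>T. lift z (muv k T)) {i} {i}"
      using mg_lift[of k "{i}" "{i}"] k b prd_single by simp
    finally show "lift z (cl i) \<le> mg (bag n k) (\<lambda>T. lift z (muv k T)) {i} {i}" .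
  qed
  have c7: "\<forall>p\<in>P. (\<Sum>T\<in>Pow {pv n p, nx n p}. lift z (wvv p T)) \<le> lift z (cl p)"
  proof
    fix p assume p: "p \<in> P"
    have "(\<Sum>T\<in>Pow {pv n p, nx n p}. lift z (wvv p T)) = (\<Sum>T\<in>Pow {pv n p, nx n p}. prd {pv n p, nx n p} (Xz z) T * (Xz z p)^2)"
      by (rule sum.cong) (use lift_wvv p in auto)
    also have "\<dots> = (Xz z p)^2" using prd_sum1[of "{pv n p, nx n p}" "Xz z"] by (simp add: sum_distrib_right[symmetric])
    also have "\<dots> \<le> z (CL (f p))" using zS p unfolding P_def Xz_def by auto
    finally show "(\<Sum>T\<in>Pow {pv n p, nx n p}. lift z (wvv p T)) \<le> lift z (cl p)" unfolding lift_def cl_def by simp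
  qed
  have c8: "\<forall>p\<in>P. \<forall>k<n-2. {pv n p, p, nx n p} \<subseteq> bag n k \<longrightarrow> (\<forall>T\<subseteq>{pv n p, nx n p}.
      (mg (bag n k) (\<lambda>T. lift z (muv k T)) {pv n p, p, nx n p} (insert p T))\<^sup>2
         \<le> lift z (wvv p T) * mg (bag n k) (\<lambda>T. lift z (muv k T)) {pv n p, nx n p} T \<and>
      0 \<le> lift z (wvv p T) \<and> 0 \<le> mg (bag n k) (\<lambda>T. lift z (muv k T)) {pv n p, nx n p} T)"
  proof (intro ballI allI impI)
    fix p k T assume p: "p \<in> P" and k: "k < n - 2" and b: "{pv n p, p, nx n p} \<subseteq> bag n k"
      and T: "T \<subseteq> {pv n p, nx n p}"
    have pn: "p < n" using P_lt p by simp
    note pf = pos_facts[OF n3 pn]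
    have e3: "{pv n p, p, nx n p} = insert p {pv n p, nx n p}" by auto
    have s3: "insert p T \<subseteq> {pv n p, p, nx n p}" using T by auto
    have "mg (bag n k) (\<lambda>T. lift z (muv k T)) {pv n p, p, nx n p} (insert p T) = prd {pv n p, p, nx n p} (Xz z) (insert p T)"
      by (rule mg_lift[OF k b s3])
    also have "\<dots> = prd (insert p {pv n p, nx n p}) (Xz z) (insert p T)" using e3 by simp
    also have "\<dots> = Xz z p * prd {pv n p, nx n p} (Xz z) T" by (rule prd_ins) (use pf T in auto)
    finally have m3: "mg (bag n k) (\<lambda>T. lift z (muv k T)) {pv n p, p, nx n p} (insert p T) = Xz z p * prd {pv n p, nx n p} (Xz z) T" .
    have m2: "mg (bag n k) (\<lambda>T. lift z (muv k T)) {pv n p, nx n p} T = prd {pv n p, nx n p} (Xz z) T"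
      using mg_lift[of k "{pv n p, nx n p}" T] k b T by auto
    have pn2: "0 \<le> prd {pv n p, nx n p} (Xz z) T"
      by (rule prd_nonneg) (use X01 pf T in auto)
    show "(mg (bag n k) (\<lambda>T. lift z (muv k T)) {pv n p, p, nx n p} (insert p T))\<^sup>2
         \<le> lift z (wvv p T) * mg (bag n k) (\<lambda>T. lift z (muv k T)) {pv n p, nx n p} T \<and>
      0 \<le> lift z (wvv p T) \<and> 0 \<le> mg (bag n k) (\<lambda>T. lift z (muv k T)) {pv n p, nx n p} T"
      unfolding m3 m2 lift_wvv[OF p T] using pn2 by (simp add: power2_eq_square)
  qed
  show ?thesis unfolding Facts_def using c1 c2 c3 c4 c5 c6 c7 c8 by blast
qed

lemma rsoc_single: "\<forall>(A, s, t) \<in> set (rsoc Fm). length A = 1"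
  unfolding Fm_simps RS_def by auto

lemma dirA: "z \<in> QP V E Lm Lp \<Longrightarrow> z \<in> projected_set I Fm"
proof -
  assume "z \<in> QP V E Lm Lp"
  then have "\<exists>(K::nat) c p. (\<forall>i<K. 0 \<le> c i \<and> p i \<in> Sset V E Lm Lp) \<and> (\<Sum>i<K. c i) = 1 \<and>
      z = (\<lambda>x. \<Sum>i<K. c i * p i x)"
    unfolding QP_alt conv_hull_def by simp
  then obtain K :: nat and c p where cp: "\<forall>i<K. 0 \<le> c i \<and> p i \<in> Sset V E Lm Lp" "(\<Sum>i<K. c i) = 1"
    and zd: "z = (\<lambda>x. \<Sum>i<K. c i * p i x)"
    by (elim exE conjE)
  define x where "x = (\<lambda>v. \<Sum>i<K. c i * lift (p i) v)"
  have lf: "\<forall>j<K. feasible I Fm (lift (p j))"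
  proof (intro allI impI)
    fix j assume "j < K"
    then have "p j \<in> Sset V E Lm Lp" using cp by simp
    then show "feasible I Fm (lift (p j))" using lift_facts feasible_iff by simp
  qed
  have feas: "feasible I Fm x" unfolding x_def
  proof (rule feasible_comb[OF Fm_simps(3) rsoc_single])
    show "\<forall>j<K. 0 \<le> c j" using cp by simp
    show "(\<Sum>j<K. c j) = 1" by (rule cp(2))
    show "\<forall>j<K. feasible I Fm (lift (p j))" by (rule lf)
  qed
  have zeq: "z = (\<lambda>cc. if cc \<in> I then x (Inl cc) else 0)"
  proof
    fix cc
    show "z cc = (if cc \<in> I then x (Inl cc) else 0)"
    proof (cases "cc \<in> I")
      case True
      then show ?thesis unfolding zd x_def lift_def by simp
    next
      case False
      have "\<forall>i<K. p i cc = 0"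
      proof (intro allI impI)
        fix i assume "i < K"
        then have "p i \<in> Sset V E Lm Lp" using cp by simp
        then show "p i cc = 0" using False unfolding Sset_def I_def by simp
      qed
      then show ?thesis using False unfolding zd by simp
    qed
  qed
  have "\<exists>x. z = (\<lambda>cc. if cc \<in> I then x (Inl cc) else 0) \<and> feasible I Fm x"
    by (rule exI[of _ x]) (use feas zeq in simp)
  then show "z \<in> projected_set I Fm" by (simp add: projected_set_def)
qed
end

lemma conv_reindex:
  assumes fJ: "finite J" and w: "\<forall>j\<in>J. 0 \<le> w j \<and> q j \<in> S" and s1: "sum w J = 1"
  shows "(\<lambda>c. \<Sum>j\<in>J. w j * q j c) \<in> conv_hull S"
proof -
  obtain h where h: "bij_betw h {0..<card J} J" using ex_bij_betw_nat_finite[OF fJ] by blast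
  have hJ: "\<forall>i<card J. h i \<in> J" using h unfolding bij_betw_def by auto
  have e: "sum g J = (\<Sum>i<card J. g (h i))" for g :: "_ \<Rightarrow> real"
    using sum.reindex_bij_betw[OF h, of g] by (simp add: atLeast0LessThan)
  have a1: "\<forall>i<card J. 0 \<le> w (h i) \<and> q (h i) \<in> S" using hJ w by auto
  have a2: "(\<Sum>i<card J. w (h i)) = 1" using s1 e[of w] by simp
  have a3: "(\<lambda>c. \<Sum>j\<in>J. w j * q j c) = (\<lambda>c. \<Sum>i<card J. w (h i) * q (h i) c)"
    using e by simp
  have "\<exists>(k::nat) c p. (\<forall>i<k. 0 \<le> c i \<and> p i \<in> S) \<and> (\<Sum>i<k. c i) = 1 \<and>
      (\<lambda>c. \<Sum>j\<in>J. w j * q j c) = (\<lambda>x. \<Sum>i<k. c i * p i x)"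
    by (rule exI[of _ "card J"], rule exI[of _ "\<lambda>i. w (h i)"], rule exI[of _ "\<lambda>i. q (h i)"])
      (use a1 a2 a3 in simp)
  then show ?thesis unfolding conv_hull_def by simp
qed

lemma conv_shift:
  assumes z0: "z0 \<in> conv_hull (Sset V E Lm Lp)" and disj: "Lm \<inter> Lp = {}" and sub: "Lm \<subseteq> V" "Lp \<subseteq> V"
    and d: "\<forall>c. z c \<noteq> z0 c \<longrightarrow> (\<exists>v\<in>Lp. c = CL v \<and> z0 c \<le> z c) \<or> (\<exists>v\<in>Lm. c = CL v \<and> z c \<le> z0 c)"
  shows "z \<in> conv_hull (Sset V E Lm Lp)"
proof -
  obtain K :: nat and c p where cp: "\<forall>i<K. 0 \<le> c i \<and> p i \<in> Sset V E Lm Lp" "(\<Sum>i<K. c i) = 1"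
    and zd: "z0 = (\<lambda>x. \<Sum>i<K. c i * p i x)"
    using z0 unfolding conv_hull_def by (elim CollectE exE conjE) simp
  define p' where "p' = (\<lambda>i x. p i x + (z x - z0 x))"
  have dCV: "z (CV v) = z0 (CV v)" for v using d[rule_format, of "CV v"] by auto
  have dCE: "z (CE e) = z0 (CE e)" for e using d[rule_format, of "CE e"] by auto
  have dLp: "v \<in> Lp \<Longrightarrow> z0 (CL v) \<le> z (CL v)" for v
    using d[rule_format, of "CL v"] disj by (cases "z (CL v) = z0 (CL v)") auto
  have dLm: "v \<in> Lm \<Longrightarrow> z (CL v) \<le> z0 (CL v)" for v
    using d[rule_format, of "CL v"] disj by (cases "z (CL v) = z0 (CL v)") auto
  have dout: "c0 \<notin> coords V E Lm Lp \<Longrightarrow> z c0 = z0 c0" for c0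
    using d[rule_format, of c0] sub unfolding coords_def by (cases "z c0 = z0 c0") auto
  have "\<forall>i<K. p' i \<in> Sset V E Lm Lp"
  proof (intro allI impI)
    fix i assume "i < K"
    then have pi: "p i \<in> Sset V E Lm Lp" using cp by simp
    show "p' i \<in> Sset V E Lm Lp"
      using pi dCV dCE dLp dLm dout unfolding Sset_def p'_def
      by (auto simp: dCV dCE) (smt (verit))+
  qed
  moreover have "z = (\<lambda>x. \<Sum>i<K. c i * p' i x)"
  proof
    fix x
    have "(\<Sum>i<K. c i * p' i x) = (\<Sum>i<K. c i * p i x) + (\<Sum>i<K. c i) * (z x - z0 x)"
      unfolding p'_def by (simp add: distrib_left sum.distrib sum_distrib_right)
    then show "z x = (\<Sum>i<K. c i * p' i x)" using cp(2) zd by simp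
  qed
  ultimately have "\<exists>(k::nat) c p. (\<forall>i<k. 0 \<le> c i \<and> p i \<in> Sset V E Lm Lp) \<and> (\<Sum>i<k. c i) = 1 \<and>
      z = (\<lambda>x. \<Sum>i<k. c i * p i x)"
    using cp by (intro exI[of _ K] exI[of _ c] exI[of _ p']) simp
  then show ?thesis unfolding conv_hull_def by simp
qed

context cyc
begin

definition "g = the_inv_into {..<n} f"

lemma inj_f: "inj_on f {..<n}" using bij_betw_imp_inj_on[OF fbij] .
lemma g_f: "i < n \<Longrightarrow> g (f i) = i" unfolding g_def by (rule the_inv_into_f_f[OF inj_f]) simp
lemma fimg: "v \<in> V \<Longrightarrow> v \<in> f ` {..<n}" using fbij by (simp add: bij_betw_def)
lemma g_lt: "v \<in> V \<Longrightarrow> g v < n"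
  using the_inv_into_into[OF inj_f fimg subset_refl] unfolding g_def by simp
lemma f_g: "v \<in> V \<Longrightarrow> f (g v) = v"
  unfolding g_def by (rule f_the_inv_into_f[OF inj_f fimg])

lemma edge_ex: "e \<in> E \<Longrightarrow> \<exists>i<n. e = {f i, f (nx n i)}"
  unfolding Edef nx_alt by auto

lemma f_ne: "i < n \<Longrightarrow> f i \<noteq> f (nx n i)"
proof
  assume i: "i < n" and e: "f i = f (nx n i)"
  have "i = nx n i" using inj_on_eq_iff[OF inj_f, of i "nx n i"] i pos_facts(1)[OF n3 i] e by simp
  then show False using pos_facts(5)[OF n3 i] by simp
qed

lemma stab_nx: "p \<in> P \<Longrightarrow> nx n p \<notin> P"
proof
  assume p: "p \<in> P" and q: "nx n p \<in> P"
  then have "f p \<in> Lp" "f (nx n p) \<in> Lp" unfolding P_def by auto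
  moreover have "{f p, f (nx n p)} \<in> E" using edge_in P_lt[OF p] by simp
  ultimately show False using stab unfolding stable_set_def by blast
qed

lemma stab_pv: "p \<in> P \<Longrightarrow> pv n p \<notin> P"
proof
  assume p: "p \<in> P" and q: "pv n p \<in> P"
  have pn: "p < n" using P_lt[OF p] .
  have "nx n (pv n p) = p" using pos_facts(4)[OF n3 pn] .
  then have "nx n (pv n p) \<in> P" using p by simp
  then show False using stab_nx[OF q] by simp
qed

lemma PMi: "P \<inter> Mi = {}" unfolding P_def Mi_def using LmLp by auto

end

context cyc
begin

lemma glue_ex:
  assumes F: "Facts x"
  shows "\<exists>D. (\<forall>A\<subseteq>{..<n}. 0 \<le> D A) \<and> (\<forall>j<n-2. \<forall>T\<subseteq>bag n j. mg {..<n} D (bag n j) T = x (muv j T))"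
proof -
  note Fs = F[unfolded Facts_def]
  have F1: "\<forall>k<n-2. \<forall>T\<subseteq>bag n k. 0 \<le> x (muv k T)" using Fs by (rule conjunct1)
  have F3: "\<forall>k. Suc k < n-2 \<longrightarrow> (\<forall>T\<subseteq>bag n k \<inter> bag n (Suc k).
     mg (bag n k) (\<lambda>T. x (muv k T)) (bag n k \<inter> bag n (Suc k)) T =
     mg (bag n (Suc k)) (\<lambda>T. x (muv (Suc k) T)) (bag n k \<inter> bag n (Suc k)) T)"
    using Fs by (elim conjE)
  have "\<exists>D. (\<forall>A \<subseteq> (\<Union>j<n-2. bag n j). 0 \<le> D A) \<and>
           (\<forall>j<n-2. \<forall>T\<subseteq>bag n j. mg (\<Union>j<n-2. bag n j) D (bag n j) T = x (muv j T))"
  proof (rule glue_chain[of "bag n" "n - 2" "\<lambda>k T. x (muv k T)" "n - 2"])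
    show "\<forall>k. finite (bag n k)" by (simp add: finite_bag)
    show "\<forall>k. Suc k < n - 2 \<longrightarrow> bag n (Suc k) \<inter> (\<Union>j\<le>k. bag n j) \<subseteq> bag n k"
      using bag_ri[OF n3] by blast
    show "\<forall>k<n - 2. \<forall>T\<subseteq>bag n k. 0 \<le> x (muv k T)" by (rule F1)
    show "\<forall>k. Suc k < n - 2 \<longrightarrow> (\<forall>T\<subseteq>bag n k \<inter> bag n (Suc k).
        mg (bag n k) (\<lambda>T. x (muv k T)) (bag n k \<inter> bag n (Suc k)) T =
        mg (bag n (Suc k)) (\<lambda>T. x (muv (Suc k) T)) (bag n k \<inter> bag n (Suc k)) T)" by (rule F3)
    show "0 < n - 2" using n3 by simp
  qed simp
  then show ?thesis unfolding bag_union[OF n3] .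
qed

context
  fixes x :: "'a coord + nat \<Rightarrow> real" and D :: "nat set \<Rightarrow> real"
  assumes Fx: "Facts x" and D1: "\<forall>A\<subseteq>{..<n}. 0 \<le> D A"
    and D2: "\<forall>j<n-2. \<forall>T\<subseteq>bag n j. mg {..<n} D (bag n j) T = x (muv j T)"
begin

lemma MGb: "k < n - 2 \<Longrightarrow> C \<subseteq> bag n k \<Longrightarrow> mg {..<n} D C T = mg (bag n k) (\<lambda>T. x (muv k T)) C T"
proof -
  assume k: "k < n - 2" and C: "C \<subseteq> bag n k"
  have "mg {..<n} D C T = sum (mg {..<n} D (bag n k)) {T2. T2 \<subseteq> bag n k \<and> T2 \<inter> C = T}"
    by (rule mg_group) (use C finite_bag in auto)
  also have "\<dots> = sum (\<lambda>T2. x (muv k T2)) {T2. T2 \<subseteq> bag n k \<and> T2 \<inter> C = T}"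
    by (rule sum.cong) (use D2 k in auto)
  also have "\<dots> = mg (bag n k) (\<lambda>T. x (muv k T)) C T" by (simp add: mg_def)
  finally show ?thesis .
qed

lemmas Fs = Fx[unfolded Facts_def]

lemma xN: "i < n \<Longrightarrow> x (cv i) = mg {..<n} D {i} {i}"
proof -
  assume i: "i < n"
  obtain k where k: "k < n - 2" "i \<in> bag n k" using bag_node[OF n3 i] by blast
  have F4: "\<forall>k<n-2. \<forall>i\<in>bag n k. x (cv i) = mg (bag n k) (\<lambda>T. x (muv k T)) {i} {i}"
    using Fs by (elim conjE)
  then show ?thesis using k MGb[of k "{i}" "{i}"] by simp
qed

lemma xE: "i < n \<Longrightarrow> x (ce i) = mg {..<n} D {i, nx n i} {i, nx n i}"
proof -
  assume i: "i < n"
  obtain k where k: "k < n - 2" "i \<in> bag n k" "nx n i \<in> bag n k" using bag_edge[OF n3 i] by blast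
  have F5: "\<forall>k<n-2. \<forall>i<n. i \<in> bag n k \<longrightarrow> nx n i \<in> bag n k \<longrightarrow>
     x (ce i) = mg (bag n k) (\<lambda>T. x (muv k T)) {i, nx n i} {i, nx n i}"
    using Fs by (elim conjE)
  then show ?thesis using k i MGb[of k "{i, nx n i}" "{i, nx n i}"] by simp
qed

lemma xM: "i \<in> Mi \<Longrightarrow> x (cl i) \<le> mg {..<n} D {i} {i}"
proof -
  assume iM: "i \<in> Mi"
  then have i: "i < n" by (rule Mi_lt)
  obtain k where k: "k < n - 2" "i \<in> bag n k" using bag_node[OF n3 i] by blast
  have F6: "\<forall>k<n-2. \<forall>i\<in>bag n k. i \<in> Mi \<longrightarrow> x (cl i) \<le> mg (bag n k) (\<lambda>T. x (muv k T)) {i} {i}"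
    using Fs by (elim conjE)
  then show ?thesis using k iM MGb[of k "{i}" "{i}"] by simp
qed

lemma xW: "p \<in> P \<Longrightarrow> (\<Sum>T\<in>Pow {pv n p, nx n p}. x (wvv p T)) \<le> x (cl p)"
proof -
  have F7: "\<forall>p\<in>P. (\<Sum>T\<in>Pow {pv n p, nx n p}. x (wvv p T)) \<le> x (cl p)"
    using Fs by (elim conjE)
  then show "p \<in> P \<Longrightarrow> ?thesis" by simp
qed

lemma xP: "p \<in> P \<Longrightarrow> T \<subseteq> {pv n p, nx n p} \<Longrightarrow>
   (mg {..<n} D {pv n p, p, nx n p} (insert p T))\<^sup>2 \<le> x (wvv p T) * mg {..<n} D {pv n p, nx n p} T \<and> 0 \<le> x (wvv p T)"
proof -
  assume p: "p \<in> P" and T: "T \<subseteq> {pv n p, nx n p}"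
  obtain k where k: "k < n - 2" "{pv n p, p, nx n p} \<subseteq> bag n k" using bag_tri[OF n3 P_lt[OF p]] by blast
  have F8: "\<forall>p\<in>P. \<forall>k<n-2. {pv n p, p, nx n p} \<subseteq> bag n k \<longrightarrow> (\<forall>T\<subseteq>{pv n p, nx n p}.
      (mg (bag n k) (\<lambda>T. x (muv k T)) {pv n p, p, nx n p} (insert p T))\<^sup>2
         \<le> x (wvv p T) * mg (bag n k) (\<lambda>T. x (muv k T)) {pv n p, nx n p} T \<and>
      0 \<le> x (wvv p T) \<and> 0 \<le> mg (bag n k) (\<lambda>T. x (muv k T)) {pv n p, nx n p} T)"
    using Fs by (elim conjE)
  have s2: "{pv n p, nx n p} \<subseteq> bag n k" using k by auto
  show ?thesis using F8 p k T MGb[OF k(1) k(2), of "insert p T"] MGb[OF k(1) s2, of T] by simp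
qed

lemma one: "(\<Sum>A\<in>Pow {..<n}. D A) = 1"
proof -
  have F2: "\<forall>k<n-2. mg (bag n k) (\<lambda>T. x (muv k T)) {} {} = 1" using Fs by (elim conjE)
  have k0: "0 < n - 2" using n3 by simp
  have "mg {..<n} D {} {} = 1" using MGb[OF k0, of "{}" "{}"] F2 k0 by simp
  moreover have "{A. A \<subseteq> {..<n} \<and> A \<inter> {} = {}} = Pow {..<n}" by auto
  ultimately show ?thesis unfolding mg_def by simp
qed


lemma dist3: "p < n \<Longrightarrow> p \<noteq> pv n p \<and> p \<noteq> nx n p \<and> pv n p \<noteq> nx n p"
  using pos_facts[OF n3] by simp

definition "xp A i = (if i \<in> P then cmf {..<n} D i (pv n i) (nx n i) (A \<inter> {pv n i, nx n i})
   else if i \<in> A then 1 else (0::real))"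

lemma xp01: "i < n \<Longrightarrow> 0 \<le> xp A i \<and> xp A i \<le> 1"
proof (cases "i \<in> P")
  case True
  assume i: "i < n"
  have "0 \<le> cmf {..<n} D i (pv n i) (nx n i) (A \<inter> {pv n i, nx n i}) \<and> cmf {..<n} D i (pv n i) (nx n i) (A \<inter> {pv n i, nx n i}) \<le> 1"
    by (rule cmf_01) (use D1 dist3[OF i] in auto)
  then show ?thesis using True unfolding xp_def by simp
next
  case False
  then show ?thesis unfolding xp_def by simp
qed

lemma EN: "i < n \<Longrightarrow> (\<Sum>A\<in>Pow {..<n}. D A * xp A i) = mg {..<n} D {i} {i}"
proof (cases "i \<in> P")
  case True
  assume i: "i < n"
  have "(\<Sum>A\<in>Pow {..<n}. D A * xp A i) = (\<Sum>A\<in>Pow {..<n}. D A * cmf {..<n} D i (pv n i) (nx n i) (A \<inter> {pv n i, nx n i}))"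
    unfolding xp_def using True by simp
  also have "\<dots> = mg {..<n} D {i} {i}" by (rule exp_node) (use D1 dist3[OF i] in auto)
  finally show ?thesis .
next
  case False
  assume i: "i < n"
  have "(\<Sum>A\<in>Pow {..<n}. D A * xp A i) = (\<Sum>A\<in>Pow {..<n}. D A * (if {i} \<subseteq> A then 1 else 0))"
    unfolding xp_def using False by simp
  also have "\<dots> = mg {..<n} D {i} {i}" by (rule exp_ind) (use i in auto)
  finally show ?thesis .
qed

lemma EE: "i < n \<Longrightarrow> (\<Sum>A\<in>Pow {..<n}. D A * (xp A i * xp A (nx n i))) = mg {..<n} D {i, nx n i} {i, nx n i}"
proof -
  assume i: "i < n"
  note pf = pos_facts[OF n3 i]
  have j: "nx n i < n" by (rule pf(1))
  show ?thesis
  proof (cases "i \<in> P")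
    case True
    then have nP: "nx n i \<notin> P" by (rule stab_nx)
    have "(\<Sum>A\<in>Pow {..<n}. D A * (xp A i * xp A (nx n i)))
        = (\<Sum>A\<in>Pow {..<n}. D A * (cmf {..<n} D i (nx n i) (pv n i) (A \<inter> {nx n i, pv n i}) * (if nx n i \<in> A then 1 else 0)))"
    proof (rule sum.cong[OF refl])
      fix A
      have "{pv n i, nx n i} = {nx n i, pv n i}" by auto
      then show "D A * (xp A i * xp A (nx n i)) = D A * (cmf {..<n} D i (nx n i) (pv n i) (A \<inter> {nx n i, pv n i}) * (if nx n i \<in> A then 1 else 0))"
        unfolding xp_def using True nP cmf_sym[of "{..<n}" D i "pv n i" "nx n i"] by simp
    qed
    also have "\<dots> = mg {..<n} D {nx n i, i} {nx n i, i}" by (rule exp_edge) (use D1 dist3[OF i] in auto)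
    also have "\<dots> = mg {..<n} D {i, nx n i} {i, nx n i}" by (simp add: insert_commute)
    finally show ?thesis .
  next
    case False
    note iP = False
    show ?thesis
    proof (cases "nx n i \<in> P")
      case True
      have pvj: "pv n (nx n i) = i" by (rule pf(3))
      have "(\<Sum>A\<in>Pow {..<n}. D A * (xp A i * xp A (nx n i)))
          = (\<Sum>A\<in>Pow {..<n}. D A * (cmf {..<n} D (nx n i) i (nx n (nx n i)) (A \<inter> {i, nx n (nx n i)}) * (if i \<in> A then 1 else 0)))"
        unfolding xp_def using True iP pvj by (intro sum.cong) auto
      also have "\<dots> = mg {..<n} D {i, nx n i} {i, nx n i}"
        by (rule exp_edge) (use D1 dist3[OF j] pvj in auto)
      finally show ?thesis .
    next
      case False
      have "(\<Sum>A\<in>Pow {..<n}. D A * (xp A i * xp A (nx n i)))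
          = (\<Sum>A\<in>Pow {..<n}. D A * (if {i, nx n i} \<subseteq> A then 1 else 0))"
        unfolding xp_def using False iP by (intro sum.cong) auto
      also have "\<dots> = mg {..<n} D {i, nx n i} {i, nx n i}" by (rule exp_ind) (use i j in auto)
      finally show ?thesis .
    qed
  qed
qed

lemma EM: "i \<in> Mi \<Longrightarrow> (\<Sum>A\<in>Pow {..<n}. D A * (xp A i)^2) = mg {..<n} D {i} {i}"
proof -
  assume iM: "i \<in> Mi"
  then have iP: "i \<notin> P" using PMi by auto
  have "(\<Sum>A\<in>Pow {..<n}. D A * (xp A i)^2) = (\<Sum>A\<in>Pow {..<n}. D A * xp A i)"
    unfolding xp_def using iP by (intro sum.cong) auto
  also have "\<dots> = mg {..<n} D {i} {i}" by (rule EN[OF Mi_lt[OF iM]])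
  finally show ?thesis .
qed

lemma EP: "p \<in> P \<Longrightarrow> (\<Sum>A\<in>Pow {..<n}. D A * (xp A p)^2) \<le> x (cl p)"
proof -
  assume p: "p \<in> P"
  have pn: "p < n" by (rule P_lt[OF p])
  have "(\<Sum>A\<in>Pow {..<n}. D A * (xp A p)^2) = (\<Sum>A\<in>Pow {..<n}. D A * (cmf {..<n} D p (pv n p) (nx n p) (A \<inter> {pv n p, nx n p}))^2)"
    unfolding xp_def using p by simp
  also have "\<dots> = (\<Sum>T\<in>Pow {pv n p, nx n p}. (mg {..<n} D {pv n p, p, nx n p} (insert p T))^2 / mg {..<n} D {pv n p, nx n p} T)"
    by (rule exp_sq) (use D1 dist3[OF pn] in auto)
  also have "\<dots> \<le> (\<Sum>T\<in>Pow {pv n p, nx n p}. x (wvv p T))"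
  proof (rule sum_mono)
    fix T assume "T \<in> Pow {pv n p, nx n p}"
    then have T: "T \<subseteq> {pv n p, nx n p}" by simp
    have h: "(mg {..<n} D {pv n p, p, nx n p} (insert p T))\<^sup>2 \<le> x (wvv p T) * mg {..<n} D {pv n p, nx n p} T"
      "0 \<le> x (wvv p T)" using xP[OF p T] by auto
    have dn: "0 \<le> mg {..<n} D {pv n p, nx n p} T" using mg_nonneg D1 by blast
    show "(mg {..<n} D {pv n p, p, nx n p} (insert p T))^2 / mg {..<n} D {pv n p, nx n p} T \<le> x (wvv p T)"
    proof (cases "mg {..<n} D {pv n p, nx n p} T = 0")
      case True
      then show ?thesis using h by simp
    next
      case False
      then have "0 < mg {..<n} D {pv n p, nx n p} T" using dn by simp
      then show ?thesis using h by (simp add: pos_divide_le_eq)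
    qed
  qed
  also have "\<dots> \<le> x (cl p)" by (rule xW[OF p])
  finally show ?thesis .
qed


definition "zA A c = (case c of CV v \<Rightarrow> if v \<in> V then xp A (g v) else 0
   | CE e \<Rightarrow> if e \<in> E then (\<Prod>v\<in>e. xp A (g v)) else 0
   | CL v \<Rightarrow> if v \<in> Lm \<union> Lp then (xp A (g v))^2 else 0)"

lemma edge_prod: "i < n \<Longrightarrow> (\<Prod>v\<in>{f i, f (nx n i)}. xp A (g v)) = xp A i * xp A (nx n i)"
  using f_ne[of i] g_f[of i] g_f[of "nx n i"] pos_facts(1)[OF n3, of i] by simp

lemma zA_S: "zA A \<in> Sset V E Lm Lp"
proof -
  have a: "\<forall>c. c \<notin> coords V E Lm Lp \<longrightarrow> zA A c = 0"
  proof (intro allI impI)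
    fix c assume "c \<notin> coords V E Lm Lp"
    then show "zA A c = 0" by (cases c) (auto simp: coords_def zA_def)
  qed
  have b: "\<forall>i\<in>Lp. zA A (CL i) \<ge> (zA A (CV i))\<^sup>2" using LpV by (auto simp: zA_def)
  have c: "\<forall>i\<in>Lm. zA A (CL i) \<le> (zA A (CV i))\<^sup>2" using LmV by (auto simp: zA_def)
  have d: "\<forall>i j. {i, j} \<in> E \<longrightarrow> zA A (CE {i, j}) = zA A (CV i) * zA A (CV j)"
  proof (intro allI impI)
    fix i j assume e: "{i, j} \<in> E"
    obtain a where a: "a < n" "{i, j} = {f a, f (nx n a)}" using edge_ex[OF e] by blast
    have ij: "i \<noteq> j"
    proof
      assume "i = j"
      then have "{f a, f (nx n a)} = {i}" using a by simp
      then have "f a = f (nx n a)" by (metis doubleton_eq_iff insert_absorb2)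
      then show False using f_ne[OF a(1)] by simp
    qed
    have iV: "i \<in> V" "j \<in> V" using a fV pos_facts(1)[OF n3 a(1)] by (auto simp: doubleton_eq_iff)
    show "zA A (CE {i, j}) = zA A (CV i) * zA A (CV j)" using e ij iV by (simp add: zA_def)
  qed
  have e: "\<forall>i\<in>V. 0 \<le> zA A (CV i) \<and> zA A (CV i) \<le> 1" using xp01 g_lt by (simp add: zA_def)
  show ?thesis unfolding Sset_def using a b c d e by blast
qed

definition "z0 = (\<lambda>c. \<Sum>A\<in>Pow {..<n}. D A * zA A c)"

lemma z0_in: "z0 \<in> conv_hull (Sset V E Lm Lp)"
  unfolding z0_def by (rule conv_reindex) (use D1 one zA_S in auto)

lemma z0_CV: "i < n \<Longrightarrow> z0 (CV (f i)) = mg {..<n} D {i} {i}"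
  unfolding z0_def zA_def using fV g_f EN by simp

lemma z0_CE: "i < n \<Longrightarrow> z0 (CE {f i, f (nx n i)}) = mg {..<n} D {i, nx n i} {i, nx n i}"
  unfolding z0_def zA_def using edge_in edge_prod EE by simp

lemma z0_CL: "i \<in> P \<union> Mi \<Longrightarrow> z0 (CL (f i)) = (\<Sum>A\<in>Pow {..<n}. D A * (xp A i)^2)"
proof -
  assume i: "i \<in> P \<union> Mi"
  then have "i < n" "f i \<in> Lm \<union> Lp" unfolding P_def Mi_def by auto
  then show ?thesis unfolding z0_def zA_def using g_f by simp
qed

lemma z0_out: "c \<notin> I \<Longrightarrow> z0 c = 0"
proof -
  assume "c \<notin> I"
  then have "\<forall>A. zA A c = 0" using zA_S unfolding Sset_def I_def by blast
  then show ?thesis unfolding z0_def by simp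
qed

lemma dirB_aux: "(\<lambda>c. if c \<in> I then x (Inl c) else 0) \<in> QP V E Lm Lp"
  unfolding QP_alt
proof (rule conv_shift[OF z0_in LmLp LmV LpV], intro allI impI)
  fix c
  let ?zt = "\<lambda>c. if c \<in> I then x (Inl c) else 0"
  assume ne: "?zt c \<noteq> z0 c"
  show "(\<exists>v\<in>Lp. c = CL v \<and> z0 c \<le> ?zt c) \<or> (\<exists>v\<in>Lm. c = CL v \<and> ?zt c \<le> z0 c)"
  proof (cases "c \<in> I")
    case False
    then show ?thesis using ne z0_out by simp
  next
    case True
    show ?thesis
    proof (cases c)
      case (CV v)
      then have v: "v \<in> V" using True unfolding I_def coords_def by auto
      have "?zt c = x (cv (g v))" using True CV f_g[OF v] unfolding cv_def by simp
      also have "\<dots> = z0 c" using xN[OF g_lt[OF v]] z0_CV[OF g_lt[OF v]] f_g[OF v] CV by simp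
      finally show ?thesis using ne by simp
    next
      case (CE e)
      then have e: "e \<in> E" using True unfolding I_def coords_def by auto
      obtain i where i: "i < n" "e = {f i, f (nx n i)}" using edge_ex[OF e] by blast
      have "?zt c = x (ce i)" using True CE i unfolding ce_def by simp
      also have "\<dots> = z0 c" using xE[OF i(1)] z0_CE[OF i(1)] CE i by simp
      finally show ?thesis using ne by simp
    next
      case (CL v)
      then have v: "v \<in> Lm \<union> Lp" using True unfolding I_def coords_def by auto
      then have vV: "v \<in> V" using LmV LpV by auto
      define i where "i = g v"
      have fi: "f i = v" "i < n" using f_g[OF vV] g_lt[OF vV] unfolding i_def by auto
      have zt: "?zt c = x (cl i)" using True CL fi unfolding cl_def by simp
      show ?thesis
      proof (cases "v \<in> Lp")
        case True
        then have iP: "i \<in> P" using fi unfolding P_def by simp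
        have "z0 c = (\<Sum>A\<in>Pow {..<n}. D A * (xp A i)^2)" using z0_CL[of i] iP CL fi by simp
        also have "\<dots> \<le> x (cl i)" by (rule EP[OF iP])
        finally show ?thesis using True CL zt by auto
      next
        case False
        then have vM: "v \<in> Lm" using v by simp
        then have iM: "i \<in> Mi" using fi unfolding Mi_def by simp
        have "x (cl i) \<le> mg {..<n} D {i} {i}" by (rule xM[OF iM])
        also have "\<dots> = z0 c" using z0_CL[of i] iM CL fi EM[OF iM] by simp
        finally show ?thesis using vM CL zt by auto
      qed
    qed
  qed
qed

end

end

lemma card_bag: "card (bag n k) \<le> 5"
proof -
  have "bag n k = set [0, n - 1, k, Suc k, Suc (Suc k)]" unfolding bag_def by simp
  then show ?thesis using card_length[of "[0, n - 1, k, Suc k, Suc (Suc k)]"] by simp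
qed

lemma card_pow_bag: "card (Pow (bag n k)) \<le> 32"
proof -
  have "card (Pow (bag n k)) = 2 ^ card (bag n k)" by (simp add: card_Pow finite_bag)
  also have "\<dots> \<le> 2 ^ 5" by (rule power_increasing) (use card_bag in auto)
  finally show ?thesis by simp
qed

lemma card2: "card {a, b} \<le> 2" by (cases "a = b") auto

lemma card_pow2: "card (Pow {a, b}) \<le> 4"
proof -
  have "card (Pow {a, b}) = 2 ^ card {a, b}" by (simp add: card_Pow)
  also have "\<dots> \<le> 2 ^ 2" by (rule power_increasing) (use card2 in auto)
  finally show ?thesis by simp
qed

lemma card_sigma_le:
  assumes "finite K" "\<forall>k\<in>K. finite (B k) \<and> card (B k) \<le> c"
  shows "card (SIGMA k:K. B k) \<le> card K * c"
proof -
  have "card (SIGMA k:K. B k) = (\<Sum>k\<in>K. card (B k))" by (rule card_SigmaI) (use assms in auto)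
  also have "\<dots> \<le> card K * c" using sum_bounded_above[of K "\<lambda>k. card (B k)" c] assms by auto
  finally show ?thesis .
qed

lemma card_UN_le2:
  assumes "finite K" "\<forall>k\<in>K. card (A k) \<le> c"
  shows "card (\<Union>k\<in>K. A k) \<le> card K * c"
proof -
  have "card (\<Union>k\<in>K. A k) \<le> (\<Sum>k\<in>K. card (A k))" by (rule card_UN_le[OF assms(1)])
  also have "\<dots> \<le> card K * c" using sum_bounded_above[of K "\<lambda>k. card (A k)" c] assms by auto
  finally show ?thesis .
qed

lemma card_eqc: "card (eqc a b) \<le> 2" unfolding eqc_def by (rule card2)

context cyc
begin

lemma cardV: "card V = n" using bij_betw_same_card[OF fbij] by simp

lemma card_P: "card P \<le> n" unfolding P_def by (rule order_trans[OF card_mono[of "{..<n}"]]) auto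
lemma card_Mi: "card Mi \<le> n" unfolding Mi_def by (rule order_trans[OF card_mono[of "{..<n}"]]) auto

lemma card_S1: "card (SIGMA k:{..<n-2}. Pow (bag n k)) \<le> 32 * n"
proof -
  have "card (SIGMA k:{..<n-2}. Pow (bag n k)) \<le> card {..<n-2} * 32"
    by (rule card_sigma_le) (auto simp: finite_bag card_pow_bag)
  then show ?thesis by simp
qed

lemma card_S2: "card (SIGMA k:{..<n-2}. bag n k) \<le> 5 * n"
proof -
  have "card (SIGMA k:{..<n-2}. bag n k) \<le> card {..<n-2} * 5"
    by (rule card_sigma_le) (auto simp: finite_bag card_bag)
  then show ?thesis by simp
qed

lemma card_I: "card I \<le> 3 * n"
proof -
  have fV: "finite V" using fbij bij_betw_finite by blast
  have "card I \<le> card (CV ` V \<union> CE ` E) + card (CL ` (Lm \<union> Lp))"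
    unfolding I_def coords_def by (rule card_Un_le)
  also have "\<dots> \<le> card (CV ` V) + card (CE ` E) + card (CL ` (Lm \<union> Lp))"
    using card_Un_le[of "CV ` V" "CE ` E"] by simp
  also have "\<dots> \<le> card V + card E + card (Lm \<union> Lp)"
  proof -
    have "finite E" unfolding Edef by simp
    moreover have "finite (Lm \<union> Lp)" using fV LmV LpV by (meson finite_Un rev_finite_subset)
    ultimately have "card (CV ` V) \<le> card V" "card (CE ` E) \<le> card E" "card (CL ` (Lm \<union> Lp)) \<le> card (Lm \<union> Lp)"
      using fV by (auto intro: card_image_le)
    then show ?thesis by linarith
  qed
  also have "\<dots> \<le> n + n + n"
  proof -
    have "card E \<le> n"
    proof -
      have "E = (\<lambda>i. {f i, f ((i + 1) mod n)}) ` {..<n}" unfolding Edef by auto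
      then show ?thesis using card_image_le[of "{..<n}" "\<lambda>i. {f i, f ((i + 1) mod n)}"] by simp
    qed
    moreover have "card (Lm \<union> Lp) \<le> card V" using LmV LpV fV by (intro card_mono) auto
    ultimately show ?thesis using cardV by simp
  qed
  finally show ?thesis by simp
qed

lemma card_labs: "m \<le> 36 * n"
proof -
  have "m \<le> card {LMu k T | k T. k < n - 2 \<and> T \<subseteq> bag n k} + card {LW p T | p T. p \<in> P \<and> T \<subseteq> {pv n p, nx n p}}"
    unfolding m_def labs_def by (rule card_Un_le)
  also have "card {LMu k T | k T. k < n - 2 \<and> T \<subseteq> bag n k} \<le> 32 * n"
  proof -
    have "{LMu k T | k T. k < n - 2 \<and> T \<subseteq> bag n k} = (\<lambda>(k, T). LMu k T) ` (SIGMA k:{..<n-2}. Pow (bag n k))"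
      by auto
    then show ?thesis using card_image_le[of "SIGMA k:{..<n-2}. Pow (bag n k)" "\<lambda>(k, T). LMu k T"] card_S1
      by (simp add: finite_bag)
  qed
  also have "card {LW p T | p T. p \<in> P \<and> T \<subseteq> {pv n p, nx n p}} \<le> 4 * n"
  proof -
    have "{LW p T | p T. p \<in> P \<and> T \<subseteq> {pv n p, nx n p}} = (\<lambda>(p, T). LW p T) ` (SIGMA p:P. Pow {pv n p, nx n p})"
      by auto
    moreover have "card (SIGMA p:P. Pow {pv n p, nx n p}) \<le> card P * 4"
      by (rule card_sigma_le) (auto simp: finP card_pow2)
    moreover have "card (SIGMA p:P. Pow {pv n p, nx n p}) \<ge> card ((\<lambda>(p, T). LW p T) ` (SIGMA p:P. Pow {pv n p, nx n p}))"
      by (rule card_image_le) (simp add: finP)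
    ultimately show ?thesis using card_P by simp
  qed
  finally show ?thesis by simp
qed


lemma finS2: "finite (SIGMA k:{..<n-2}. bag n k)" by (auto simp: finite_bag)
lemma finS1: "finite (SIGMA k:{..<n-2}. Pow (bag n k))" by (auto simp: finite_bag)

lemma card_lin: "card (L1 \<union> L2 \<union> L3 \<union> L4 \<union> L5 \<union> L6 \<union> L7) \<le> 124 * n"
proof -
  have c1: "card L1 \<le> 32 * n" unfolding L1_def using card_image_le[OF finS1] card_S1 le_trans by blast
  have c2: "card L2 \<le> 2 * n"
  proof -
    have "card L2 \<le> card {..<n-2} * 2" unfolding L2_def by (rule card_UN_le2) (auto simp: card_eqc)
    then show ?thesis by simp
  qed
  have c3: "card L3 \<le> 64 * n"
  proof -
    let ?S = "SIGMA k:{k. Suc k < n - 2}. Pow (bag n k \<inter> bag n (Suc k))"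
    have sub: "?S \<subseteq> (SIGMA k:{..<n-2}. Pow (bag n k))" by auto
    have fS: "finite ?S" using finite_subset[OF sub finS1] .
    have "card ?S \<le> 32 * n" using card_mono[OF finS1 sub] card_S1 by simp
    moreover have "card L3 \<le> card ?S * 2" unfolding L3_def
      by (rule card_UN_le2[OF fS]) (auto simp: card_eqc)
    ultimately show ?thesis by simp
  qed
  have c4: "card L4 \<le> 10 * n"
  proof -
    have "card L4 \<le> card (SIGMA k:{..<n-2}. bag n k) * 2" unfolding L4_def
      by (rule card_UN_le2[OF finS2]) (auto simp: card_eqc)
    then show ?thesis using card_S2 by simp
  qed
  have c5: "card L5 \<le> 10 * n"
  proof -
    let ?S = "SIGMA k:{..<n-2}. {i. i < n \<and> i \<in> bag n k \<and> nx n i \<in> bag n k}"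
    have sub: "?S \<subseteq> (SIGMA k:{..<n-2}. bag n k)" by auto
    have fS: "finite ?S" using finite_subset[OF sub finS2] .
    have "card ?S \<le> 5 * n" using card_mono[OF finS2 sub] card_S2 by simp
    moreover have "card L5 \<le> card ?S * 2" unfolding L5_def
      by (rule card_UN_le2[OF fS]) (auto simp: card_eqc)
    ultimately show ?thesis by simp
  qed
  have c6: "card L6 \<le> 5 * n"
  proof -
    let ?S = "SIGMA k:{..<n-2}. bag n k \<inter> Mi"
    have sub: "?S \<subseteq> (SIGMA k:{..<n-2}. bag n k)" by auto
    have fS: "finite ?S" using finite_subset[OF sub finS2] .
    have "card ?S \<le> 5 * n" using card_mono[OF finS2 sub] card_S2 by simp
    then show ?thesis unfolding L6_def using card_image_le[OF fS] le_trans by blast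
  qed
  have c7: "card L7 \<le> n" unfolding L7_def using card_image_le[OF finP] card_P le_trans by blast
  have "card (L1 \<union> L2 \<union> L3 \<union> L4 \<union> L5 \<union> L6 \<union> L7) \<le>
        card L1 + card L2 + card L3 + card L4 + card L5 + card L6 + card L7"
    by (meson card_Un_le add_right_mono le_trans)
  then show ?thesis using c1 c2 c3 c4 c5 c6 c7 by simp
qed

lemma card_RS: "card RS \<le> 4 * n * n"
proof -
  let ?S = "SIGMA p:P. SIGMA k:{k. k < n - 2 \<and> {pv n p, p, nx n p} \<subseteq> bag n k}. Pow {pv n p, nx n p}"
  have inner: "card (SIGMA k:{k. k < n - 2 \<and> {pv n p, p, nx n p} \<subseteq> bag n k}. Pow {pv n p, nx n p}) \<le> n * 4" for p
  proof -
    have a: "card (SIGMA k:{k. k < n - 2 \<and> {pv n p, p, nx n p} \<subseteq> bag n k}. Pow {pv n p, nx n p})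
        \<le> card {k. k < n - 2 \<and> {pv n p, p, nx n p} \<subseteq> bag n k} * 4"
      by (rule card_sigma_le) (auto simp: card_pow2)
    have "card {k. k < n - 2 \<and> {pv n p, p, nx n p} \<subseteq> bag n k} \<le> n"
      by (rule order_trans[OF card_mono[of "{..<n}"]]) auto
    then have b: "card {k. k < n - 2 \<and> {pv n p, p, nx n p} \<subseteq> bag n k} * 4 \<le> n * 4" by (rule mult_le_mono1)
    show ?thesis using a b by (rule le_trans)
  qed
  have fS: "finite ?S" by (auto simp: finP)
  have "card ?S \<le> card P * (n * 4)"
    by (rule card_sigma_le) (use inner finP in auto)
  also have "\<dots> \<le> n * (n * 4)" using card_P by simp
  finally have "card ?S \<le> 4 * n * n" by simp
  then show ?thesis unfolding RS_def using card_image_le[OF fS] le_trans by blast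
qed

lemma proj_eq: "projected_set I Fm = QP V E Lm Lp"
proof
  show "QP V E Lm Lp \<subseteq> projected_set I Fm" using dirA by blast
  show "projected_set I Fm \<subseteq> QP V E Lm Lp"
  proof
    fix y assume "y \<in> projected_set I Fm"
    then obtain x where y: "y = (\<lambda>c. if c \<in> I then x (Inl c) else 0)" and fx: "feasible I Fm x"
      unfolding projected_set_def by blast
    have F: "Facts x" using fx feasible_iff by simp
    obtain D where D1: "\<forall>A\<subseteq>{..<n}. 0 \<le> D A" and D2: "\<forall>j<n-2. \<forall>T\<subseteq>bag n j. mg {..<n} D (bag n j) T = x (muv j T)"
      using glue_ex[OF F] by blast
    show "y \<in> QP V E Lm Lp" unfolding y by (rule dirB_aux[OF F D1 D2])
  qed
qed

lemma final: "\<exists>F. projected_set (coords V E Lm Lp) F = QP V E Lm Lp \<and>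
     num_vars (coords V E Lm Lp) F \<le> 200 * card V ^ 2 + 200 \<and>
     num_constraints F \<le> 200 * card V ^ 2 + 200"
proof (intro exI conjI)
  show "projected_set (coords V E Lm Lp) Fm = QP V E Lm Lp" using proj_eq unfolding I_def .
  have nn: "n \<le> n * n" by simp
  have sq: "card V ^ 2 = n * n" using cardV by (simp add: power2_eq_square)
  have "num_vars (coords V E Lm Lp) Fm = card I + m" unfolding num_vars_def I_def Fm_simps by simp
  also have "\<dots> \<le> 39 * n" using card_I card_labs by simp
  also have "\<dots> \<le> 200 * card V ^ 2 + 200" unfolding sq using nn by linarith
  finally show "num_vars (coords V E Lm Lp) Fm \<le> 200 * card V ^ 2 + 200" .
  have "num_constraints Fm = card (L1 \<union> L2 \<union> L3 \<union> L4 \<union> L5 \<union> L6 \<union> L7) + card RS"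
    unfolding num_constraints_def Fm_simps by simp
  also have "\<dots> \<le> 124 * n + 4 * n * n" using card_lin card_RS by simp
  also have "\<dots> \<le> 200 * card V ^ 2 + 200" unfolding sq using nn by linarith
  finally show "num_constraints Fm \<le> 200 * card V ^ 2 + 200" .
qed

end

theorem proposition9:
  "\<exists>(C::nat) (d::nat). \<forall>(V::'a set) E Lm Lp.
     graph_with_loops V E Lm Lp \<and> stable_set E Lp \<and> chordless_cycle V E \<longrightarrow>
     (\<exists>F. projected_set (coords V E Lm Lp) F = QP V E Lm Lp \<and>
          num_vars (coords V E Lm Lp) F \<le> C * card V ^ d + C \<and>
          num_constraints F \<le> C * card V ^ d + C)"
proof (rule exI[of _ 200], rule exI[of _ 2], intro allI impI)
  fix V :: "'a set" and E Lm Lp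
  assume H: "graph_with_loops V E Lm Lp \<and> stable_set E Lp \<and> chordless_cycle V E"
  obtain n :: nat and f where n3: "3 \<le> n" and fb: "bij_betw f {..<n} V"
    and Ed: "E = {{f i, f ((i + 1) mod n)} | i. i < n}"
    using H unfolding chordless_cycle_def by blast
  have gw: "Lm \<subseteq> V" "Lp \<subseteq> V" "Lm \<inter> Lp = {}" using H unfolding graph_with_loops_def by auto
  have st: "stable_set E Lp" using H by simp
  define P0 where "P0 = {i. i < n \<and> f i \<in> Lp}"
  have fl: "finite (labs n P0)" by (rule finite_labs) (simp add: P0_def)
  obtain idx where idx: "bij_betw idx (labs n P0) {0..<card (labs n P0)}"
    using ex_bij_betw_finite_nat[OF fl] by blast
  have C: "cyc V E Lm Lp n f idx"
    unfolding cyc_def using n3 fb Ed gw st idx by (simp add: P0_def atLeast0LessThan)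
  show "\<exists>F. projected_set (coords V E Lm Lp) F = QP V E Lm Lp \<and>
          num_vars (coords V E Lm Lp) F \<le> 200 * card V ^ 2 + 200 \<and>
          num_constraints F \<le> 200 * card V ^ 2 + 200"
    by (rule cyc.final[OF C])
qed

end
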